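(* There are functors $\mathbf{FinGraph}^l_\star\to\mathbf{FinLoset}$ and $\mathbf{FinGraph}^s_\star\to\mathbf{FinLoset}$ which compute the lexicographic depth-first and breadth-first traversals respectively, i.e. which send each object $G$ to the vertices of $G$ linearly ordered by the lexicographic depth-first traversal (respectively, the lexicographic breadth-first traversal) of $G$ from its distinguished vertex.
   Context: A (directed) graph is $(V,\to)$ with $\to\subseteq V\times V$; $N(u)$ is the set of outgoing edges of $u$. A pointed graph has a distinguished vertex $v_0$; connected means every vertex is reachable by a path from $v_0$. A path is a finite sequence $v_1\to\cdots\to v_n$ of vertices joined by edges, of length $|\pi|$; proper if no vertex repeats; co-initial paths share their source; $\pi\sqsubset\sigma$ means $\pi$ is a proper prefix of $\sigma$. A finite edge-ordered graph is a finite graph with a strict linear order $\triangleleft$ on each neighborhood. Lexicographic path order: if $\pi\sqsubset\sigma$ then $\pi\prec\sigma$ (symmetrically); otherwise, with $\zeta$ the longest common prefix, $u$ its target and $v_1,v_2$ the next vertices, $\pi\prec\sigma$ iff $u\to v_1\triangleleft u\to v_2$. Shortlex: $\pi\prec^s\sigma$ iff $|\pi|<|\sigma|$ or ($|\pi|=|\sigma|$ and $\pi\prec\sigma$). $\min(u\rightsquigarrow v)$ is the $\prec$-least proper path, $\min^s(u\rightsquigarrow v)$ the $\prec^s$-least path, from $u$ to $v$. A homomorphism of finite pointed edge-ordered graphs $h:G\to H$ is a vertex map with (i) $u\to v$ implies $h(u)\to h(v)$; (ii) the distinguished vertex of $G$ is the unique vertex mapped to the distinguished vertex of $H$; (iii)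 $u\to v_1\triangleleft u\to v_2$ implies $h(u)\to h(v_1)\triangleleft h(u)\to h(v_2)$. A lex-homomorphism additionally satisfies $h(\min(u\rightsquigarrow v))=\min(h(u)\rightsquigarrow h(v))$; a short-lex homomorphism additionally satisfies $h(\min^s(u\rightsquigarrow v))=\min^s(h(u)\rightsquigarrow h(v))$. $\mathbf{FinGraph}^l_\star$ (resp. $\mathbf{FinGraph}^s_\star$) is the category of connected, finite, pointed, edge-ordered graphs with lex-homomorphisms (resp. short-lex homomorphisms); $\mathbf{FinLoset}$ is the category of finite linearly ordered sets and monotone maps. Lexicographic depth-first search: with list $L=()$ and stack $S=(v_0)$, repeatedly pop $v$; if $v\notin L$, append $v$ to $L$ and push the neighbors of $v$ not in $L$ in reverse $\triangleleft$-order. Lexicographic breadth-first search: the same with a queue $Q=(v_0)$, dequeuing from the front and enqueuing the neighbors not in $L$ in $\triangleleft$-order. The respective traversal is the order in which vertices are appended to $L$. *)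

theory Defs
  imports Main "HOL-Library.While_Combinator"
begin

text \<open>A finite pointed edge-ordered graph: vertex set, for each vertex the list of its
  out-neighbours in increasing edge order (this list encodes both the edges and the
  strict linear order on each neighbourhood), and the distinguished vertex.\<close>
record 'v egraph =
  verts :: "'v set"
  succs :: "'v \<Rightarrow> 'v list"
  root  :: "'v"

definition edges :: "'v egraph \<Rightarrow> ('v \<times> 'v) set" where
  "edges G = {(u, v). u \<in> verts G \<and> v \<in> set (succs G u)}"

definition edge_less :: "'v egraph \<Rightarrow> 'v \<Rightarrow> 'v \<Rightarrow> 'v \<Rightarrow> bool" where
  "edge_less G u v1 v2 \<longleftrightarrow>
     (\<exists>i j. i < j \<and> j < length (succs G u) \<and> succs G u ! i = v1 \<and> succs G u ! j = v2)"

definition fin_graph :: "'v egraph \<Rightarrow> bool" where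
  "fin_graph G \<longleftrightarrow> finite (verts G) \<and> root G \<in> verts G \<and>
     (\<forall>u \<in> verts G. distinct (succs G u) \<and> set (succs G u) \<subseteq> verts G) \<and>
     (\<forall>v \<in> verts G. (root G, v) \<in> (edges G)\<^sup>*)"

text \<open>Paths as nonempty vertex lists; length of the path = number of edges.\<close>
definition is_path :: "'v egraph \<Rightarrow> 'v list \<Rightarrow> bool" where
  "is_path G p \<longleftrightarrow> p \<noteq> [] \<and> set p \<subseteq> verts G \<and>
     (\<forall>i. Suc i < length p \<longrightarrow> p ! Suc i \<in> set (succs G (p ! i)))"

definition path_from_to :: "'v egraph \<Rightarrow> 'v \<Rightarrow> 'v \<Rightarrow> 'v list \<Rightarrow> bool" where
  "path_from_to G u v p \<longleftrightarrow> is_path G p \<and> hd p = u \<and> last p = v"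

definition lex_less :: "'v egraph \<Rightarrow> 'v list \<Rightarrow> 'v list \<Rightarrow> bool" where
  "lex_less G p q \<longleftrightarrow>
     (\<exists>r. r \<noteq> [] \<and> q = p @ r) \<or>
     (\<exists>z x y r1 r2. z \<noteq> [] \<and> p = z @ x # r1 \<and> q = z @ y # r2 \<and> edge_less G (last z) x y)"

definition shortlex_less :: "'v egraph \<Rightarrow> 'v list \<Rightarrow> 'v list \<Rightarrow> bool" where
  "shortlex_less G p q \<longleftrightarrow>
     length p < length q \<or> (length p = length q \<and> lex_less G p q)"

definition is_lex_min :: "'v egraph \<Rightarrow> 'v \<Rightarrow> 'v \<Rightarrow> 'v list \<Rightarrow> bool" where
  "is_lex_min G u v p \<longleftrightarrow> path_from_to G u v p \<and> distinct p \<and>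
     (\<forall>q. path_from_to G u v q \<and> distinct q \<and> q \<noteq> p \<longrightarrow> lex_less G p q)"

definition is_shortlex_min :: "'v egraph \<Rightarrow> 'v \<Rightarrow> 'v \<Rightarrow> 'v list \<Rightarrow> bool" where
  "is_shortlex_min G u v p \<longleftrightarrow> path_from_to G u v p \<and>
     (\<forall>q. path_from_to G u v q \<and> q \<noteq> p \<longrightarrow> shortlex_less G p q)"

definition graph_hom :: "'a egraph \<Rightarrow> 'b egraph \<Rightarrow> ('a \<Rightarrow> 'b) \<Rightarrow> bool" where
  "graph_hom G H h \<longleftrightarrow>
     (\<forall>v \<in> verts G. h v \<in> verts H) \<and>
     (\<forall>u \<in> verts G. \<forall>v \<in> set (succs G u). h v \<in> set (succs H (h u))) \<and>
     (\<forall>v \<in> verts G. h v = root H \<longleftrightarrow> v = root G) \<and>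
     (\<forall>u \<in> verts G. \<forall>v1 v2. edge_less G u v1 v2 \<longrightarrow> edge_less H (h u) (h v1) (h v2))"

definition lex_hom :: "'a egraph \<Rightarrow> 'b egraph \<Rightarrow> ('a \<Rightarrow> 'b) \<Rightarrow> bool" where
  "lex_hom G H h \<longleftrightarrow> graph_hom G H h \<and>
     (\<forall>u \<in> verts G. \<forall>v \<in> verts G. \<forall>p.
        is_lex_min G u v p \<longrightarrow> is_lex_min H (h u) (h v) (map h p))"

definition shortlex_hom :: "'a egraph \<Rightarrow> 'b egraph \<Rightarrow> ('a \<Rightarrow> 'b) \<Rightarrow> bool" where
  "shortlex_hom G H h \<longleftrightarrow> graph_hom G H h \<and>
     (\<forall>u \<in> verts G. \<forall>v \<in> verts G. \<forall>p.
        is_shortlex_min G u v p \<longrightarrow> is_shortlex_min H (h u) (h v) (map h p))"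

text \<open>Lexicographic depth-first search. State (L, S); the stack S is a list whose head is
  the top. Pushing the new neighbours in reverse edge order leaves the least one on top.\<close>
definition dfs_step :: "'v egraph \<Rightarrow> 'v list \<times> 'v list \<Rightarrow> 'v list \<times> 'v list" where
  "dfs_step G st = (case st of (L, S) \<Rightarrow>
     (case S of [] \<Rightarrow> (L, S)
      | v # S' \<Rightarrow> if v \<in> set L then (L, S')
                  else (L @ [v], filter (\<lambda>w. w \<notin> set (L @ [v])) (succs G v) @ S')))"

definition dfs_traversal :: "'v egraph \<Rightarrow> 'v list" where
  "dfs_traversal G = fst (the (while_option (\<lambda>(L, S). S \<noteq> []) (dfs_step G) ([], [root G])))"

definition bfs_step :: "'v egraph \<Rightarrow> 'v list \<times> 'v list \<Rightarrow> 'v list \<times> 'v list" where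
  "bfs_step G st = (case st of (L, Q) \<Rightarrow>
     (case Q of [] \<Rightarrow> (L, Q)
      | v # Q' \<Rightarrow> if v \<in> set L then (L, Q')
                  else (L @ [v], Q' @ filter (\<lambda>w. w \<notin> set (L @ [v])) (succs G v))))"

definition bfs_traversal :: "'v egraph \<Rightarrow> 'v list" where
  "bfs_traversal G = fst (the (while_option (\<lambda>(L, Q). Q \<noteq> []) (bfs_step G) ([], [root G])))"

definition trav_le :: "'v list \<Rightarrow> 'v \<Rightarrow> 'v \<Rightarrow> bool" where
  "trav_le L v w \<longleftrightarrow> (\<exists>i j. i \<le> j \<and> j < length L \<and> L ! i = v \<and> L ! j = w)"

end

theory Submission
  imports Defs "HOL-Library.List_Lexorder"
begin

lemma is_path_single[simp]: "is_path G [u] \<longleftrightarrow> u \<in> verts G"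
  by (auto simp: is_path_def)

lemma is_path_Cons2[simp]:
  "is_path G (u # v # p) \<longleftrightarrow> u \<in> verts G \<and> v \<in> set (succs G u) \<and> is_path G (v # p)"
proof
  assume a: "is_path G (u # v # p)"
  then have A: "\<forall>i. Suc i < length (u # v # p) \<longrightarrow> (u # v # p) ! Suc i \<in> set (succs G ((u # v # p) ! i))"
    and S: "set (u # v # p) \<subseteq> verts G"
    unfolding is_path_def by blast+
  have "v \<in> set (succs G u)" using spec[OF A, of 0] by simp
  moreover have "\<forall>i. Suc i < length (v # p) \<longrightarrow> (v # p) ! Suc i \<in> set (succs G ((v # p) ! i))"
  proof (intro allI impI)
    fix i assume "Suc i < length (v # p)"
    then show "(v # p) ! Suc i \<in> set (succs G ((v # p) ! i))" using spec[OF A, of "Suc i"] by simp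
  qed
  ultimately show "u \<in> verts G \<and> v \<in> set (succs G u) \<and> is_path G (v # p)"
    using S unfolding is_path_def by simp
next
  assume a: "u \<in> verts G \<and> v \<in> set (succs G u) \<and> is_path G (v # p)"
  show "is_path G (u # v # p)" unfolding is_path_def
  proof (intro conjI allI impI)
    fix i assume "Suc i < length (u # v # p)"
    then show "(u # v # p) ! Suc i \<in> set (succs G ((u # v # p) ! i))"
      using a unfolding is_path_def by (cases i) auto
  qed (use a in \<open>auto simp: is_path_def\<close>)
qed

lemma is_path_Nil[simp]: "\<not> is_path G []" by (simp add: is_path_def)

lemma is_path_append:
  assumes "a \<noteq> []" "b \<noteq> []"
  shows "is_path G (a @ b) \<longleftrightarrow> is_path G a \<and> is_path G b \<and> hd b \<in> set (succs G (last a))"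
  using assms(1)
proof (induction a rule: induct_list012)
  case (2 x)
  obtain y b' where "b = y # b'" using assms(2) by (cases b) auto
  then show ?case by auto
next
  case (3 x y zs)
  then show ?case by simp
qed simp

lemma is_path_join:
  assumes "is_path G A" "is_path G B" "last A = hd B"
  shows "is_path G (A @ tl B)"
proof (cases "tl B = []")
  case True then show ?thesis using assms by simp
next
  case False
  have "A \<noteq> []" "B \<noteq> []" using assms(1,2) by auto
  then obtain b1 b2 bs where B: "B = b1 # b2 # bs" using False
    by (metis list.collapse)
  then have "hd (tl B) \<in> set (succs G (hd B))" "is_path G (tl B)"
    using assms(2) by auto
  then show ?thesis using assms \<open>A \<noteq> []\<close> False is_path_append[of A "tl B" G] by simp
qed

lemma is_path_take: "is_path G p \<Longrightarrow> 0 < n \<Longrightarrow> is_path G (take n p)"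
proof (cases "n < length p")
  case True
  assume "is_path G p" "0 < n"
  then have "take n p \<noteq> []" "drop n p \<noteq> []" using True by auto
  then show ?thesis using is_path_append[of "take n p" "drop n p" G] \<open>is_path G p\<close> by simp
qed simp

lemma is_path_drop: "is_path G p \<Longrightarrow> n < length p \<Longrightarrow> is_path G (drop n p)"
proof (cases "n = 0")
  case False
  assume "is_path G p" "n < length p"
  then have "take n p \<noteq> []" "drop n p \<noteq> []" using False by auto
  then show ?thesis using is_path_append[of "take n p" "drop n p" G] \<open>is_path G p\<close> by simp
qed simp

lemma is_path_butlast: "is_path G p \<Longrightarrow> length p \<ge> 2 \<Longrightarrow> is_path G (butlast p)"
  using is_path_take[of G p "length p - 1"] by (simp add: butlast_conv_take)

lemma is_path_snoc:
  "is_path G p \<Longrightarrow> w \<in> set (succs G (last p)) \<Longrightarrow> w \<in> verts G \<Longrightarrow> is_path G (p @ [w])"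
  using is_path_append[of p "[w]" G] by (cases p) auto

lemma is_path_snocD:
  "is_path G (p @ [w]) \<Longrightarrow> p \<noteq> [] \<Longrightarrow> w \<in> set (succs G (last p))"
  using is_path_append[of p "[w]" G] by auto

lemma is_path_mid:
  assumes "is_path G (z @ x # r)" "z \<noteq> []"
  shows "x \<in> set (succs G (last z))"
  using is_path_append[of z "x # r" G] assms by auto

lemma is_path_verts: "is_path G p \<Longrightarrow> x \<in> set p \<Longrightarrow> x \<in> verts G"
  unfolding is_path_def by blast

definition idx :: "'v list \<Rightarrow> 'v \<Rightarrow> nat" where
  "idx xs x = (LEAST i. i < length xs \<and> xs ! i = x)"

lemma idx_nth: "distinct xs \<Longrightarrow> i < length xs \<Longrightarrow> idx xs (xs ! i) = i"
  unfolding idx_def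
  by (rule Least_equality) (auto simp: nth_eq_iff_index_eq leI)

lemma idx_in: "x \<in> set xs \<Longrightarrow> idx xs x < length xs \<and> xs ! idx xs x = x"
proof -
  assume "x \<in> set xs"
  then obtain i where "i < length xs" "xs ! i = x" by (auto simp: in_set_conv_nth)
  then show ?thesis unfolding idx_def using LeastI[of "\<lambda>i. i < length xs \<and> xs ! i = x" i] by blast
qed

lemma edge_less_iff:
  assumes "distinct (succs G u)"
  shows "edge_less G u x y \<longleftrightarrow> x \<in> set (succs G u) \<and> y \<in> set (succs G u) \<and>
            idx (succs G u) x < idx (succs G u) y"
proof
  assume "edge_less G u x y"
  then obtain i j where "i < j" "j < length (succs G u)" "succs G u ! i = x" "succs G u ! j = y"
    unfolding edge_less_def by blast
  then show "x \<in> set (succs G u) \<and> y \<in> set (succs G u) \<and> idx (succs G u) x < idx (succs G u) y"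
  proof -
    have "i < length (succs G u)" using \<open>i < j\<close> \<open>j < length (succs G u)\<close> by simp
    then have "idx (succs G u) x = i" "idx (succs G u) y = j" "x \<in> set (succs G u)" "y \<in> set (succs G u)"
      using idx_nth[OF assms] \<open>j < length (succs G u)\<close> \<open>succs G u ! i = x\<close> \<open>succs G u ! j = y\<close>
      by (auto simp del: nth_mem intro: nth_mem)
    then show ?thesis using \<open>i < j\<close> by simp
  qed
next
  assume "x \<in> set (succs G u) \<and> y \<in> set (succs G u) \<and> idx (succs G u) x < idx (succs G u) y"
  then show "edge_less G u x y" unfolding edge_less_def
    apply (rule_tac exI[of _ "idx (succs G u) x"], rule_tac exI[of _ "idx (succs G u) y"])
    using idx_in[of x "succs G u"] idx_in[of y "succs G u"] by simp
qed

fun pcode :: "'v egraph \<Rightarrow> 'v list \<Rightarrow> nat list" where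
  "pcode G (u # v # p) = idx (succs G u) v # pcode G (v # p)"
| "pcode G _ = []"

lemma pcode_append:
  "z \<noteq> [] \<Longrightarrow> pcode G (z @ x # r) = pcode G z @ idx (succs G (last z)) x # pcode G (x # r)"
  by (induction z rule: induct_list012) auto

lemma lex_split:
  assumes "p \<noteq> []" "q \<noteq> []" "hd p = hd q" "p \<noteq> q"
  shows "(\<exists>r. r \<noteq> [] \<and> q = p @ r) \<or> (\<exists>r. r \<noteq> [] \<and> p = q @ r) \<or>
         (\<exists>z x y r1 r2. z \<noteq> [] \<and> x \<noteq> y \<and> p = z @ x # r1 \<and> q = z @ y # r2)"
  using assms
proof (induction p arbitrary: q)
  case Nil then show ?case by simp
next
  case (Cons a p)
  then obtain q' where q: "q = a # q'" by (cases q) auto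
  show ?case
  proof (cases "p = []")
    case True then show ?thesis using q Cons by auto
  next
    case pne: False
    show ?thesis
    proof (cases "q' = []")
      case True then show ?thesis using q pne by auto
    next
      case qne: False
      show ?thesis
      proof (cases "hd p = hd q'")
        case True
        have "p \<noteq> q'" using Cons q by auto
        from Cons.IH[OF pne qne True this] show ?thesis
        proof (elim disjE exE conjE)
          fix z x y r1 r2 assume "z \<noteq> []" "x \<noteq> y" "p = z @ x # r1" "q' = z @ y # r2"
          then show ?thesis using q by (intro disjI2) (rule exI[of _ "a # z"], auto)
        qed (use q in auto)
      next
        case False
        have "a # p = [a] @ hd p # tl p" "q = [a] @ hd q' # tl q'" using q pne qne by auto
        then show ?thesis using False by blast
      qed
    qed
  qed
qed

locale fg =
  fixes G :: "'v egraph"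
  assumes fg: "fin_graph G"
begin

lemma fin: "finite (verts G)" and root_in: "root G \<in> verts G"
  and dist: "u \<in> verts G \<Longrightarrow> distinct (succs G u)"
  and succ_in: "u \<in> verts G \<Longrightarrow> set (succs G u) \<subseteq> verts G"
  and conn: "v \<in> verts G \<Longrightarrow> (root G, v) \<in> (edges G)\<^sup>*"
  using fg unfolding fin_graph_def by auto

lemma lex_less_pcode:
  assumes "is_path G p" "is_path G q" "lex_less G p q"
  shows "pcode G p < pcode G q"
  using assms(3) unfolding lex_less_def
proof (elim disjE exE conjE)
  fix r assume r: "r \<noteq> []" "q = p @ r"
  then obtain y r' where "r = y # r'" by (cases r) auto
  moreover have "p \<noteq> []" using assms(1) by auto
  ultimately have "pcode G q = pcode G p @ idx (succs G (last p)) y # pcode G (y # r')"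
    using r pcode_append[of p G y r'] by simp
  then show ?thesis unfolding list_less_def by (simp add: lexord_append_rightI)
next
  fix z x y r1 r2 assume h: "z \<noteq> []" "p = z @ x # r1" "q = z @ y # r2" "edge_less G (last z) x y"
  have "last z \<in> set p" using h by simp
  then have lz: "last z \<in> verts G" using assms(1) is_path_verts by metis
  have "idx (succs G (last z)) x < idx (succs G (last z)) y"
    using h(4) edge_less_iff[OF dist[OF lz]] by blast
  then have "(pcode G z @ idx (succs G (last z)) x # pcode G (x # r1),
              pcode G z @ idx (succs G (last z)) y # pcode G (y # r2)) \<in> lexord {(u, v). u < v}"
    by (intro lexord_append_left_rightI) simp
  then show ?thesis using h pcode_append[of z G]
    unfolding list_less_def by simp
qed

lemma lex_total:
  assumes "is_path G p" "is_path G q" "hd p = hd q" "p \<noteq> q"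
  shows "lex_less G p q \<or> lex_less G q p"
proof -
  have "p \<noteq> []" "q \<noteq> []" using assms by auto
  from lex_split[OF this assms(3,4)] show ?thesis
  proof (elim disjE exE conjE)
    fix z x y r1 r2 assume h: "z \<noteq> []" "x \<noteq> y" "p = z @ x # r1" "q = z @ y # r2"
    have x: "x \<in> set (succs G (last z))" using is_path_mid[of G z x r1] h assms(1) by simp
    have y: "y \<in> set (succs G (last z))" using is_path_mid[of G z y r2] h assms(2) by simp
    have "last z \<in> set p" using h by simp
  then have "last z \<in> verts G" using assms(1) is_path_verts by metis
    then have d: "distinct (succs G (last z))" by (rule dist)
    have "idx (succs G (last z)) x \<noteq> idx (succs G (last z)) y"
      using idx_in[OF x] idx_in[OF y] h(2) by metis
    then have "edge_less G (last z) x y \<or> edge_less G (last z) y x"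
      using edge_less_iff[OF d] x y by (meson linorder_neqE_nat)
    then show ?thesis
    proof
      assume "edge_less G (last z) x y"
      then have "lex_less G p q" unfolding lex_less_def using h by blast
      then show ?thesis by simp
    next
      assume "edge_less G (last z) y x"
      then have "lex_less G q p" unfolding lex_less_def using h by blast
      then show ?thesis by simp
    qed
  qed (auto simp: lex_less_def)
qed

lemma lex_irrefl: "is_path G p \<Longrightarrow> \<not> lex_less G p p"
  using lex_less_pcode by blast

lemma lex_asym: "is_path G p \<Longrightarrow> is_path G q \<Longrightarrow> lex_less G p q \<Longrightarrow> \<not> lex_less G q p"
  using lex_less_pcode by (meson less_asym)

lemma lex_trans:
  assumes "is_path G p" "is_path G q" "is_path G s" "hd p = hd s"
    "lex_less G p q" "lex_less G q s"
  shows "lex_less G p s"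
proof -
  have "pcode G p < pcode G s" using lex_less_pcode assms by (meson less_trans)
  then show ?thesis using lex_total[OF assms(1,3,4)] lex_less_pcode assms(1,3) by fastforce
qed

end

definition mdfs :: "'v egraph \<Rightarrow> 'v \<Rightarrow> 'v list" where
  "mdfs G v = (SOME p. is_lex_min G (root G) v p)"

context fg begin

lemma reach_distinct:
  assumes "(root G, v) \<in> (edges G)\<^sup>*"
  shows "\<exists>p. path_from_to G (root G) v p \<and> distinct p"
  using assms
proof (induction rule: rtrancl_induct)
  case base
  then show ?case using root_in by (intro exI[of _ "[root G]"]) (simp add: path_from_to_def)
next
  case (step y z)
  then obtain p where p: "is_path G p" "hd p = root G" "last p = y" "distinct p"
    by (auto simp: path_from_to_def)
  have yz: "y \<in> verts G" "z \<in> set (succs G y)" using step(2) by (auto simp: edges_def)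
  then have zV: "z \<in> verts G" using succ_in by blast
  show ?case
  proof (cases "z \<in> set p")
    case True
    then obtain a b where ab: "p = a @ z # b" by (meson split_list)
    have "take (Suc (length a)) p = a @ [z]" using ab by simp
    then have "is_path G (a @ [z])" using is_path_take[OF p(1), of "Suc (length a)"] by simp
    moreover have "hd (a @ [z]) = root G" using p(2) ab by (cases a) auto
    moreover have "distinct (a @ [z])" using p(4) ab by simp
    ultimately show ?thesis by (intro exI[of _ "a @ [z]"]) (simp add: path_from_to_def)
  next
    case False
    have "p \<noteq> []" using p(1) by auto
    then have "is_path G (p @ [z])" using is_path_snoc[OF p(1)] yz zV p(3) by simp
    moreover have "hd (p @ [z]) = root G" using p(2) \<open>p \<noteq> []\<close> by simp
    moreover have "distinct (p @ [z])" using p(4) False by simp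
    ultimately show ?thesis by (intro exI[of _ "p @ [z]"]) (simp add: path_from_to_def)
  qed
qed

lemma lexmin_exists_gen:
  assumes p0: "path_from_to G u v p0" "distinct p0"
  shows "\<exists>p. is_lex_min G u v p"
proof -
  define P where "P = {p. path_from_to G u v p \<and> distinct p}"
  have "P \<subseteq> {xs. set xs \<subseteq> verts G \<and> length xs \<le> card (verts G)}"
  proof
    fix p assume "p \<in> P"
    then have "set p \<subseteq> verts G" "distinct p" by (auto simp: P_def path_from_to_def is_path_def)
    then have "length p \<le> card (verts G)" using card_mono[OF fin] distinct_card[of p] by metis
    then show "p \<in> {xs. set xs \<subseteq> verts G \<and> length xs \<le> card (verts G)}"
      using \<open>set p \<subseteq> verts G\<close> by simp
  qed
  then have finP: "finite P" using finite_lists_length_le[OF fin] finite_subset by blast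
  have "p0 \<in> P" using p0 by (simp add: P_def)
  then have ne: "pcode G ` P \<noteq> {}" by auto
  have "Min (pcode G ` P) \<in> pcode G ` P" using Min_in[OF _ ne] finP by blast
  then obtain p where pP: "p \<in> P" and pc: "pcode G p = Min (pcode G ` P)" by auto
  have "is_lex_min G u v p" unfolding is_lex_min_def
  proof (intro conjI allI impI)
    show "path_from_to G u v p" "distinct p" using pP by (auto simp: P_def)
    fix q assume q: "path_from_to G u v q \<and> distinct q \<and> q \<noteq> p"
    then have qP: "q \<in> P" by (simp add: P_def)
    have "pcode G p \<le> pcode G q" using pc qP finP by simp
    moreover have "is_path G p" "is_path G q" "hd p = hd q" using pP qP by (auto simp: P_def path_from_to_def)
    moreover have "p \<noteq> q" using q by auto
    ultimately have "lex_less G p q \<or> lex_less G q p" using lex_total[of p q] by simp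
    moreover have "\<not> lex_less G q p"
    proof
      assume "lex_less G q p"
      then have "pcode G q < pcode G p" using lex_less_pcode \<open>is_path G p\<close> \<open>is_path G q\<close> by blast
      then show False using \<open>pcode G p \<le> pcode G q\<close> by simp
    qed
    ultimately show "lex_less G p q" by simp
  qed
  then show ?thesis by blast
qed

lemma lexmin_unique:
  assumes "is_lex_min G u v p" "is_lex_min G u v q"
  shows "p = q"
proof (rule ccontr)
  assume "p \<noteq> q"
  then have "lex_less G p q" "lex_less G q p" using assms unfolding is_lex_min_def by auto
  moreover have "is_path G p" "is_path G q" using assms unfolding is_lex_min_def path_from_to_def by auto
  ultimately show False using lex_asym by blast
qed

lemma lexmin_prefix:
  assumes pm: "is_lex_min G u v p" and pab: "p = a @ b" and ane: "a \<noteq> []"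
  shows "is_lex_min G u (last a) a"
proof (rule ccontr)
  assume nm: "\<not> ?thesis"
  have pp: "is_path G p" "hd p = u" "last p = v" "distinct p"
    using pm by (auto simp: is_lex_min_def path_from_to_def)
  have "take (length a) p = a" using pab by simp
  then have pa: "is_path G a" using is_path_take[OF pp(1), of "length a"] ane by simp
  have ha: "hd a = u" using pp pab ane by simp
  have da: "distinct a" using pp pab by simp
  have pfa: "path_from_to G u (last a) a" using pa ha by (simp add: path_from_to_def)
  obtain q where qm: "is_lex_min G u (last a) q" using lexmin_exists_gen[OF pfa da] by blast
  have qq: "is_path G q" "hd q = u" "last q = last a" "distinct q"
    using qm by (auto simp: is_lex_min_def path_from_to_def)
  have "q \<noteq> a" using nm qm by auto
  then have "lex_less G q a" using qm pfa da by (auto simp: is_lex_min_def)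
  then consider (pre) t where "t \<noteq> []" "a = q @ t"
    | (dv) z x y r1 r2 where "z \<noteq> []" "q = z @ x # r1" "a = z @ y # r2" "edge_less G (last z) x y"
    unfolding lex_less_def by blast
  then show False
  proof cases
    case pre
    have "q \<noteq> []" using qq by auto
    then have "last q \<in> set q" by simp
    moreover have "last q = last t" using qq pre by simp
    moreover have "last t \<in> set t" using pre by simp
    ultimately show False using da pre by auto
  next
    case dv
    define T where "T = y # r2 @ b"
    define Q where "Q = x # r1"
    have pT: "p = z @ T" using pab dv by (simp add: T_def)
    have qQ: "q = z @ Q" using dv by (simp add: Q_def)
    have "last a \<in> set T" using dv by (simp add: T_def)
    moreover have "last Q = last a" using qq qQ by (simp add: Q_def)
    moreover have Qne: "Q \<noteq> []" by (simp add: Q_def)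
    ultimately have "Q ! (length Q - 1) \<in> set T" using last_conv_nth[OF Qne] by simp
    then have ex: "\<exists>k. k < length Q \<and> Q ! k \<in> set T" using Qne
      by (intro exI[of _ "length Q - 1"]) simp
    define k where "k = (LEAST k. k < length Q \<and> Q ! k \<in> set T)"
    have k: "k < length Q" "Q ! k \<in> set T" using LeastI_ex[OF ex] unfolding k_def by blast+
    have kmin: "Q ! i \<notin> set T" if "i < k" for i
      using not_less_Least[of i "\<lambda>k. k < length Q \<and> Q ! k \<in> set T"] that k(1) unfolding k_def by auto
    obtain j where j: "j < length T" "T ! j = Q ! k" using k(2) by (auto simp: in_set_conv_nth)
    define new where "new = z @ take (Suc k) Q @ drop (Suc j) T"
    define A where "A = take (length z + Suc k) q"
    define B where "B = drop (length z + j) p"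
    have A: "A = z @ take (Suc k) Q" using qQ by (simp add: A_def)
    have B: "B = drop j T" using pT by (simp add: B_def)
    have pA: "is_path G A" unfolding A_def by (rule is_path_take[OF qq(1)]) simp
    have pB: "is_path G B" unfolding B_def by (rule is_path_drop[OF pp(1)]) (use pT j in simp)
    have lastA: "last A = Q ! k" using A k(1) by (simp add: take_Suc_conv_app_nth)
    have hdB: "hd B = T ! j" using B j by (simp add: hd_drop_conv_nth)
    have tlB: "tl B = drop (Suc j) T" using B by (simp add: drop_Suc tl_drop)
    have newAB: "new = A @ tl B" using A tlB by (simp add: new_def)
    have pnew: "is_path G new" unfolding newAB by (rule is_path_join[OF pA pB]) (simp add: lastA hdB j)
    have hnew: "hd new = u" using qq qQ dv by (simp add: new_def)
    have lnew: "last new = v"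
    proof (cases "Suc j < length T")
      case True
      then have "last new = last T" by (simp add: new_def)
      then show ?thesis using pp pT by (simp add: T_def)
    next
      case False
      then have "j = length T - 1" using j by simp
      then have "last new = T ! (length T - 1)" using lastA j
        by (simp add: new_def take_Suc_conv_app_nth k(1))
      then show ?thesis using pp pT by (simp add: T_def last_conv_nth)
    qed
    have dT: "distinct T" and dzT: "set z \<inter> set T = {}" using pp pT by auto
    have dA: "distinct A" using qq(4) unfolding A_def by simp
    have "set A \<inter> set (tl B) = {}"
    proof -
      have "set z \<inter> set (drop (Suc j) T) = {}" using dzT set_drop_subset by fastforce
      moreover have "set (take (Suc k) Q) \<inter> set (drop (Suc j) T) = {}"
      proof -
        { fix w assume w1: "w \<in> set (take (Suc k) Q)" and w2: "w \<in> set (drop (Suc j) T)"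
          then obtain i where i: "i < Suc k" "i < length Q" "Q ! i = w" by (auto simp: in_set_conv_nth)
          have "w \<in> set T" using w2 set_drop_subset by fastforce
          then have "\<not> i < k" using kmin i(3) by blast
          then have "i = k" using i(1) by simp
          then have "w = T ! j" using i j by simp
          moreover have "T ! j \<notin> set (drop (Suc j) T)"
          proof -
            have "T = take (Suc j) T @ drop (Suc j) T" by simp
            moreover have "T ! j \<in> set (take (Suc j) T)" using j by (simp add: take_Suc_conv_app_nth)
            ultimately show ?thesis using dT distinct_append[of "take (Suc j) T" "drop (Suc j) T"] by auto
          qed
          ultimately have False using w2 by simp }
        then show ?thesis by blast
      qed
      ultimately show ?thesis using A tlB by auto
    qed
    moreover have "distinct (tl B)" using dT tlB by simp
    ultimately have dnew: "distinct new" using dA newAB by simp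
    have xy: "x \<noteq> y"
    proof -
      have "last z \<in> set p" using pT dv by simp
      then have "last z \<in> verts G" using pp is_path_verts by metis
      then have "idx (succs G (last z)) x < idx (succs G (last z)) y"
        using dv(4) edge_less_iff[OF dist] by blast
      then show ?thesis by auto
    qed
    have "new = z @ x # (take k r1 @ drop (Suc j) T)" by (simp add: new_def Q_def)
    moreover have "p = z @ y # (r2 @ b)" using pT by (simp add: T_def)
    ultimately have lnp: "lex_less G new p" unfolding lex_less_def using dv(1,4) by blast
    have "new \<noteq> p" using lnp lex_irrefl pnew by blast
    moreover have "path_from_to G u v new" using pnew hnew lnew by (simp add: path_from_to_def)
    ultimately have "lex_less G p new" using pm dnew unfolding is_lex_min_def by blast
    then show False using lnp lex_asym pp(1) pnew by blast
  qed
qed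

end

context fg begin

abbreviation m where "m \<equiv> mdfs G"
abbreviation vlt where "vlt x y \<equiv> lex_less G (m x) (m y)"

lemma m_min: assumes "v \<in> verts G" shows "is_lex_min G (root G) v (m v)"
proof -
  obtain p0 where "path_from_to G (root G) v p0" "distinct p0" using reach_distinct conn[OF assms] by blast
  then have "\<exists>p. is_lex_min G (root G) v p" by (rule lexmin_exists_gen)
  then show ?thesis unfolding mdfs_def by (rule someI_ex)
qed

lemma m_props: assumes "v \<in> verts G"
  shows "is_path G (m v)" "hd (m v) = root G" "last (m v) = v" "distinct (m v)"
  using m_min[OF assms] by (auto simp: is_lex_min_def path_from_to_def)

lemma m_ne: "v \<in> verts G \<Longrightarrow> m v \<noteq> []" using m_props(1) by force

lemma m_eq: assumes "is_lex_min G (root G) v p" shows "m v = p"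
proof -
  have pp: "is_path G p" "last p = v" using assms by (auto simp: is_lex_min_def path_from_to_def)
  then have "p \<noteq> []" by auto
  then have "last p \<in> set p" by simp
  then have "v \<in> verts G" using is_path_verts[OF pp(1), of "last p"] pp(2) by simp
  then show ?thesis using lexmin_unique m_min assms by blast
qed

lemma m_root: "m (root G) = [root G]"
proof (rule m_eq)
  show "is_lex_min G (root G) (root G) [root G]" unfolding is_lex_min_def
  proof (intro conjI allI impI)
    fix q assume q: "path_from_to G (root G) (root G) q \<and> distinct q \<and> q \<noteq> [root G]"
    then have "q \<noteq> []" "hd q = last q" "distinct q" by (auto simp: path_from_to_def)
    then obtain a q' where qa: "q = a # q'" by (cases q) auto
    have "q' = []"
    proof (rule ccontr)
      assume "q' \<noteq> []"
      then have "last q = last q'" "last q' \<in> set q'" using qa by auto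
      then show False using \<open>hd q = last q\<close> \<open>distinct q\<close> qa by auto
    qed
    then have "q = [root G]" using qa q by (auto simp: path_from_to_def)
    then show "lex_less G [root G] q" using q by simp
  qed (use root_in in \<open>auto simp: path_from_to_def\<close>)
qed

lemma m_inj: "v \<in> verts G \<Longrightarrow> w \<in> verts G \<Longrightarrow> m v = m w \<Longrightarrow> v = w"
  using m_props(3) by metis

lemma m_parent:
  assumes "w \<in> verts G" "w \<noteq> root G"
  shows "\<exists>p\<in>verts G. m w = m p @ [w] \<and> w \<in> set (succs G p)"
proof -
  have ne: "m w \<noteq> []" using m_ne assms by simp
  have "butlast (m w) \<noteq> []"
  proof
    assume "butlast (m w) = []"
    then have "m w = [w]" using ne m_props(3)[OF assms(1)] by (metis append_butlast_last_id append_Nil)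
    then show False using m_props(2)[OF assms(1)] assms(2) by simp
  qed
  moreover have mw: "m w = butlast (m w) @ [w]" using ne m_props(3)[OF assms(1)]
    by (metis append_butlast_last_id)
  ultimately have lm: "is_lex_min G (root G) (last (butlast (m w))) (butlast (m w))"
    using lexmin_prefix[OF m_min[OF assms(1)]] by metis
  define p where "p = last (butlast (m w))"
  have "m p = butlast (m w)" using m_eq lm p_def by simp
  moreover have "p \<in> verts G"
    using lm unfolding p_def is_lex_min_def path_from_to_def
    by (metis \<open>butlast (m w) \<noteq> []\<close> is_path_verts last_in_set)
  moreover have "w \<in> set (succs G p)"
    using is_path_snocD[of G "butlast (m w)" w] mw m_props(1)[OF assms(1)] \<open>butlast (m w) \<noteq> []\<close>
    unfolding p_def by simp
  ultimately show ?thesis using mw by metis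
qed

lemma m_anc:
  assumes "y \<in> verts G" "x \<in> set (m y)"
  shows "m x = m y \<or> vlt x y"
proof -
  obtain i where i: "i < length (m y)" "m y ! i = x" using assms(2) by (auto simp: in_set_conv_nth)
  define a where "a = take (Suc i) (m y)"
  have ane: "a \<noteq> []" using i by (auto simp: a_def)
  have la: "last a = x" using i by (simp add: a_def take_Suc_conv_app_nth)
  have "is_lex_min G (root G) (last a) a"
    using lexmin_prefix[OF m_min[OF assms(1)], of a "drop (Suc i) (m y)"] ane by (simp add: a_def)
  then have mx: "m x = a" using m_eq la by simp
  show ?thesis
  proof (cases "Suc i < length (m y)")
    case True
    then have "m y = a @ drop (Suc i) (m y)" "drop (Suc i) (m y) \<noteq> []" by (auto simp: a_def)
    then show ?thesis using mx unfolding lex_less_def by blast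
  next
    case False
    then show ?thesis using mx i by (simp add: a_def)
  qed
qed

lemma vlt_irrefl: "v \<in> verts G \<Longrightarrow> \<not> vlt v v"
  using lex_irrefl m_props(1) by blast

lemma vlt_asym: "v \<in> verts G \<Longrightarrow> w \<in> verts G \<Longrightarrow> vlt v w \<Longrightarrow> \<not> vlt w v"
  using lex_asym m_props(1) by blast

lemma vlt_trans: "u \<in> verts G \<Longrightarrow> v \<in> verts G \<Longrightarrow> w \<in> verts G \<Longrightarrow> vlt u v \<Longrightarrow> vlt v w \<Longrightarrow> vlt u w"
  using lex_trans[of "m u" "m v" "m w"] m_props(1,2) by simp

lemma vlt_total: "v \<in> verts G \<Longrightarrow> w \<in> verts G \<Longrightarrow> v \<noteq> w \<Longrightarrow> vlt v w \<or> vlt w v"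
  using lex_total[of "m v" "m w"] m_props(1,2) m_inj by metis

lemma least_exists:
  assumes "U \<subseteq> verts G" "U \<noteq> {}"
  shows "\<exists>u\<in>U. \<forall>y\<in>U. y \<noteq> u \<longrightarrow> vlt u y"
proof -
  have finU: "finite U" using assms(1) fin finite_subset by blast
  have ne: "pcode G ` m ` U \<noteq> {}" using assms by auto
  have "Min (pcode G ` m ` U) \<in> pcode G ` m ` U" using Min_in[OF _ ne] finU by blast
  then obtain u where uU: "u \<in> U" and uc: "pcode G (m u) = Min (pcode G ` m ` U)" by auto
  have "\<forall>y\<in>U. y \<noteq> u \<longrightarrow> vlt u y"
  proof (intro ballI impI)
    fix y assume y: "y \<in> U" "y \<noteq> u"
    have le: "pcode G (m u) \<le> pcode G (m y)" using uc y finU by simp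
    have "vlt u y \<or> vlt y u" using vlt_total y uU assms(1) by blast
    moreover have "\<not> vlt y u"
    proof
      assume "vlt y u"
      then have "pcode G (m y) < pcode G (m u)" using lex_less_pcode m_props(1) y uU assms(1) by blast
      then show False using le by simp
    qed
    ultimately show "vlt u y" by simp
  qed
  then show ?thesis using uU by blast
qed

end

context fg begin

definition drel :: "'v list \<Rightarrow> 'v list \<Rightarrow> 'v \<Rightarrow> bool" where
  "drel L \<pi> s \<longleftrightarrow> (\<pi> = [root G] \<and> s = root G) \<or> (\<exists>p\<in>set L. \<pi> = m p @ [s] \<and> s \<in> set (succs G p))"

definition dinv :: "'v list \<times> 'v list \<Rightarrow> bool" where
  "dinv st \<longleftrightarrow> (case st of (L, S) \<Rightarrow>
     distinct L \<and> set L \<subseteq> verts G \<and>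
     (\<forall>x\<in>set L. \<forall>y\<in>verts G - set L. vlt x y) \<and>
     sorted_wrt (\<lambda>x y. vlt x y) L \<and>
     (\<exists>PS. list_all2 (drel L) PS S \<and> sorted_wrt (lex_less G) PS \<and>
        (\<forall>w\<in>verts G - set L. (w = root G \<or> (\<exists>p\<in>set L. m w = m p @ [w])) \<longrightarrow> m w \<in> set PS)))"

lemma drel_last: "drel L \<pi> s \<Longrightarrow> last \<pi> = s"
  unfolding drel_def by auto

lemma drel_V: "set L \<subseteq> verts G \<Longrightarrow> drel L \<pi> s \<Longrightarrow> s \<in> verts G"
  unfolding drel_def using root_in succ_in by blast

lemma drel_mono: "set L \<subseteq> set L' \<Longrightarrow> drel L \<pi> s \<Longrightarrow> drel L' \<pi> s"
  unfolding drel_def by blast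

lemma visited_closed:
  assumes I2: "\<forall>x\<in>set L. \<forall>y\<in>verts G - set L. vlt x y" and LV: "set L \<subseteq> verts G"
    and p: "p \<in> set L" and x: "x \<in> set (m p)"
  shows "x \<in> set L"
proof (rule ccontr)
  assume xL: "x \<notin> set L"
  have pV: "p \<in> verts G" using p LV by blast
  have xV: "x \<in> verts G" using is_path_verts[OF m_props(1)[OF pV] x] .
  have "vlt p x" using I2 p xL xV by blast
  moreover have "m x = m p \<or> vlt x p" using m_anc[OF pV x] .
  ultimately show False using m_inj[OF xV pV] xL p vlt_asym[OF pV xV] by blast
qed

lemma dinv_init: "dinv ([], [root G])"
  unfolding dinv_def
  by (auto simp: drel_def m_root intro!: exI[of _ "[[root G]]"])

lemma least_parent:
  assumes I2: "\<forall>x\<in>set L. \<forall>y\<in>verts G - set L. vlt x y" and LV: "set L \<subseteq> verts G"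
    and u: "u \<in> verts G - set L" and least: "\<forall>y\<in>verts G - set L. y \<noteq> u \<longrightarrow> vlt u y"
  shows "u = root G \<or> (\<exists>p\<in>set L. m u = m p @ [u])"
proof (cases "u = root G")
  case False
  then obtain p where p: "p \<in> verts G" "m u = m p @ [u]" using m_parent u by blast
  have uV: "u \<in> verts G" using u by blast
  have "vlt p u" using p(2) unfolding lex_less_def by auto
  have "p \<in> set L"
  proof (rule ccontr)
    assume "p \<notin> set L"
    then have pU: "p \<in> verts G - set L" using p(1) by blast
    show False
    proof (cases "p = u")
      case True then show False using \<open>vlt p u\<close> vlt_irrefl[OF uV] by simp
    next
      case False
      then have "vlt u p" using least pU by blast
      then show False using \<open>vlt p u\<close> vlt_asym[OF p(1) uV] by simp
    qed
  qed
  then show ?thesis using p by blast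
qed simp

lemma dinv_final:
  assumes "dinv (L, [])"
  shows "set L = verts G"
proof (rule ccontr)
  assume ne: "set L \<noteq> verts G"
  have LV: "set L \<subseteq> verts G" and I2: "\<forall>x\<in>set L. \<forall>y\<in>verts G - set L. vlt x y"
    and I5: "\<forall>w\<in>verts G - set L. (w = root G \<or> (\<exists>p\<in>set L. m w = m p @ [w])) \<longrightarrow> m w \<in> set []"
    using assms unfolding dinv_def by auto
  have "verts G - set L \<noteq> {}" using ne LV by blast
  then obtain u where u: "u \<in> verts G - set L" "\<forall>y\<in>verts G - set L. y \<noteq> u \<longrightarrow> vlt u y"
    using least_exists[of "verts G - set L"] by blast
  then show False using least_parent[OF I2 LV u] I5 by simp
qed

lemma lex_snoc_ext:
  assumes "lex_less G p b" "\<not> (\<exists>t. t \<noteq> [] \<and> b = p @ t)"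
  shows "lex_less G (p @ [c]) b"
  using assms unfolding lex_less_def
  by (metis append_Cons append_assoc)

end

context fg begin

lemma dinv_step_visited:
  assumes inv: "dinv (L, v # S')" and vL: "v \<in> set L"
  shows "dinv (L, S')"
proof -
  obtain PS where ps: "list_all2 (drel L) PS (v # S')" "sorted_wrt (lex_less G) PS"
    "\<forall>w\<in>verts G - set L. (w = root G \<or> (\<exists>p\<in>set L. m w = m p @ [w])) \<longrightarrow> m w \<in> set PS"
    using inv unfolding dinv_def by auto
  obtain \<pi> PS' where PS: "PS = \<pi> # PS'" using ps(1) by (cases PS) auto
  have rv: "drel L \<pi> v" "list_all2 (drel L) PS' S'" using ps(1) PS by auto
  have "\<forall>w\<in>verts G - set L. (w = root G \<or> (\<exists>p\<in>set L. m w = m p @ [w])) \<longrightarrow> m w \<in> set PS'"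
  proof (intro ballI impI)
    fix w assume w: "w \<in> verts G - set L" "w = root G \<or> (\<exists>p\<in>set L. m w = m p @ [w])"
    then have "m w \<in> set (\<pi> # PS')" using ps(3) PS by blast
    moreover have "m w \<noteq> \<pi>" using drel_last[OF rv(1)] m_props(3)[of w] w vL by auto
    ultimately show "m w \<in> set PS'" by simp
  qed
  moreover have "sorted_wrt (lex_less G) PS'" using ps(2) PS by simp
  ultimately have ex: "\<exists>PS. list_all2 (drel L) PS S' \<and> sorted_wrt (lex_less G) PS \<and>
        (\<forall>w\<in>verts G - set L. (w = root G \<or> (\<exists>p\<in>set L. m w = m p @ [w])) \<longrightarrow> m w \<in> set PS)"
    using rv(2) by blast
  have "distinct L \<and> set L \<subseteq> verts G \<and>
     (\<forall>x\<in>set L. \<forall>y\<in>verts G - set L. vlt x y) \<and>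
     sorted_wrt (\<lambda>x y. vlt x y) L" using inv unfolding dinv_def by simp
  then show ?thesis using ex unfolding dinv_def by simp
qed

lemma dinv_step_new:
  assumes inv: "dinv (L, v # S')" and vL: "v \<notin> set L"
  shows "dinv (L @ [v], filter (\<lambda>w. w \<notin> set (L @ [v])) (succs G v) @ S')"
proof -
  have dL: "distinct L" and LV: "set L \<subseteq> verts G"
    and I2: "\<forall>x\<in>set L. \<forall>y\<in>verts G - set L. vlt x y"
    and I3: "sorted_wrt (\<lambda>x y. vlt x y) L"
    using inv unfolding dinv_def by auto
  obtain PS where ps: "list_all2 (drel L) PS (v # S')" "sorted_wrt (lex_less G) PS"
    "\<forall>w\<in>verts G - set L. (w = root G \<or> (\<exists>p\<in>set L. m w = m p @ [w])) \<longrightarrow> m w \<in> set PS"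
    using inv unfolding dinv_def by auto
  obtain \<pi> PS' where PS: "PS = \<pi> # PS'" using ps(1) by (cases PS) auto
  have rv: "drel L \<pi> v" and rS: "list_all2 (drel L) PS' S'" using ps(1) PS by auto
  have sPS: "\<forall>b\<in>set PS'. lex_less G \<pi> b" "sorted_wrt (lex_less G) PS'" using ps(2) PS by auto
  have vV: "v \<in> verts G" using drel_V[OF LV rv] .
  have vU: "v \<in> verts G - set L" using vV vL by blast
  obtain u where u: "u \<in> verts G - set L" "\<forall>y\<in>verts G - set L. y \<noteq> u \<longrightarrow> vlt u y"
    using least_exists[of "verts G - set L"] vU by blast
  have uV: "u \<in> verts G" using u by blast
  have "m u \<in> set (\<pi> # PS')" using ps(3) PS least_parent[OF I2 LV u] u(1) by blast
  then have pi_mu: "\<pi> = m u \<or> lex_less G \<pi> (m u)" using sPS by auto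
  have pipath: "is_path G \<pi> \<and> hd \<pi> = root G \<and> last \<pi> = v \<and> distinct \<pi>"
    using rv unfolding drel_def
  proof (elim disjE bexE conjE)
    assume "\<pi> = [root G]" "v = root G"
    then show ?thesis using root_in by simp
  next
    fix p assume p: "p \<in> set L" "\<pi> = m p @ [v]" "v \<in> set (succs G p)"
    have pV: "p \<in> verts G" using p LV by blast
    have "v \<notin> set (m p)" using visited_closed[OF I2 LV p(1)] vL by blast
    moreover have "is_path G (m p @ [v])"
      using is_path_snoc[OF m_props(1)[OF pV]] m_props(3)[OF pV] p(3) vV by simp
    ultimately show ?thesis using p m_props[OF pV] m_ne[OF pV] by simp
  qed
  have mv_pi: "m v = \<pi> \<or> lex_less G (m v) \<pi>"
  proof (cases "m v = \<pi>")
    case False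
    have "\<forall>q. path_from_to G (root G) v q \<and> distinct q \<and> q \<noteq> m v \<longrightarrow> lex_less G (m v) q"
      using m_min[OF vV] by (simp add: is_lex_min_def)
    moreover have "path_from_to G (root G) v \<pi>" "distinct \<pi>" using pipath by (simp_all add: path_from_to_def)
    ultimately show ?thesis using False by auto
  qed simp
  have u_v: "u = v \<or> vlt u v"
  proof (cases "u = v")
    case False
    then show ?thesis using u(2) vU by simp
  qed simp
  have pmu: "is_path G (m u)" "hd (m u) = root G" using m_props[OF uV] by auto
  have pmv: "is_path G (m v)" "hd (m v) = root G" using m_props[OF vV] by auto
  have pip: "is_path G \<pi>" "hd \<pi> = root G" using pipath by auto
  have uv: "u = v"
  proof (rule ccontr)
    assume "u \<noteq> v"
    then have l1: "lex_less G (m u) (m v)" using u_v by simp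
    have l2: "lex_less G (m u) \<pi>"
    proof (cases "m v = \<pi>")
      case True then show ?thesis using l1 by simp
    next
      case False
      then have "lex_less G (m v) \<pi>" using mv_pi by simp
      then show ?thesis using lex_trans[OF pmu(1) pmv(1) pip(1)] l1 pmu(2) pip(2) by simp
    qed
    show False
    proof (cases "\<pi> = m u")
      case True then show False using l2 lex_irrefl[OF pmu(1)] by simp
    next
      case False
      then have "lex_less G \<pi> (m u)" using pi_mu by simp
      then show False using l2 lex_asym[OF pmu(1) pip(1)] by simp
    qed
  qed
  have mvpi: "m v = \<pi>"
  proof (rule ccontr)
    assume ne: "m v \<noteq> \<pi>"
    then have "lex_less G (m v) \<pi>" using mv_pi by simp
    moreover have "lex_less G \<pi> (m v)" using pi_mu uv ne by auto
    ultimately show False using lex_asym[OF pmv(1) pip(1)] by simp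
  qed
  have least: "\<forall>y\<in>verts G - set L. y \<noteq> v \<longrightarrow> vlt v y" using u(2) uv by simp
  define F where "F = filter (\<lambda>w. w \<notin> set (L @ [v])) (succs G v)"
  define PS'' where "PS'' = map (\<lambda>c. m v @ [c]) F @ PS'"
  have FS: "set F \<subseteq> set (succs G v)" "\<forall>c\<in>set F. c \<notin> set (L @ [v])" by (auto simp: F_def)
  have L'V: "set (L @ [v]) \<subseteq> verts G" using LV vV by simp
  have r1: "list_all2 (drel (L @ [v])) (map (\<lambda>c. m v @ [c]) F) F"
    unfolding list_all2_conv_all_nth
  proof (intro conjI allI impI)
    fix i assume "i < length (map (\<lambda>c. m v @ [c]) F)"
    then have "i < length F" by simp
    then have "F ! i \<in> set (succs G v)" using FS(1) nth_mem by blast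
    then show "drel (L @ [v]) (map (\<lambda>c. m v @ [c]) F ! i) (F ! i)"
      unfolding drel_def using \<open>i < length F\<close> by auto
  qed simp
  have r2: "list_all2 (drel (L @ [v])) PS' S'"
    using rS by (rule list_all2_mono) (auto intro: drel_mono)
  have rel: "list_all2 (drel (L @ [v])) PS'' (F @ S')"
    unfolding PS''_def by (rule list_all2_appendI[OF r1 r2])
  have se: "sorted_wrt (edge_less G v) (succs G v)"
    unfolding sorted_wrt_iff_nth_less edge_less_def by blast
  then have "sorted_wrt (edge_less G v) F" unfolding F_def by (rule sorted_wrt_filter)
  moreover have "lex_less G (m v @ [x]) (m v @ [y])" if exy: "edge_less G v x y" for x y
  proof -
    have "m v \<noteq> [] \<and> m v @ [x] = m v @ x # [] \<and> m v @ [y] = m v @ y # [] \<and> edge_less G (last (m v)) x y"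
      using m_ne[OF vV] m_props(3)[OF vV] exy by simp
    then show ?thesis unfolding lex_less_def by blast
  qed
  ultimately have s1: "sorted_wrt (lex_less G) (map (\<lambda>c. m v @ [c]) F)"
    unfolding sorted_wrt_map by (rule sorted_wrt_mono_rel[rotated]) blast
  have s3: "lex_less G (m v @ [c]) b" if b: "b \<in> set PS'" for b c
  proof -
    obtain i where i: "i < length PS'" "PS' ! i = b" using b by (auto simp: in_set_conv_nth)
    have rb: "drel L b (S' ! i)" using list_all2_nthD[OF rS i(1)] i(2) by simp
    have lb: "lex_less G (m v) b" using sPS(1) b mvpi by simp
    have "\<not> (\<exists>t. t \<noteq> [] \<and> b = m v @ t)"
    proof
      assume "\<exists>t. t \<noteq> [] \<and> b = m v @ t"
      then obtain t where t: "t \<noteq> []" "b = m v @ t" by blast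
      have mvne: "m v \<noteq> []" using m_ne[OF vV] .
      show False using rb unfolding drel_def
      proof (elim disjE bexE conjE)
        assume "b = [root G]"
        then show False using t mvne by (cases "m v") auto
      next
        fix p assume p: "p \<in> set L" "b = m p @ [S' ! i]"
        have "butlast b = m v @ butlast t" using t by (simp add: butlast_append)
        moreover have "butlast b = m p" using p by simp
        ultimately have "v \<in> set (m p)" using m_props(3)[OF vV] mvne by (metis Un_iff last_in_set set_append)
        then show False using visited_closed[OF I2 LV p(1)] vL by blast
      qed
    qed
    then show ?thesis using lex_snoc_ext[OF lb] by blast
  qed
  have sorted: "sorted_wrt (lex_less G) PS''"
    unfolding PS''_def sorted_wrt_append using s1 sPS(2) s3 by auto
  have cover: "\<forall>w\<in>verts G - set (L @ [v]). (w = root G \<or> (\<exists>p\<in>set (L @ [v]). m w = m p @ [w])) \<longrightarrow> m w \<in> set PS''"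
  proof (intro ballI impI)
    fix w assume w: "w \<in> verts G - set (L @ [v])" "w = root G \<or> (\<exists>p\<in>set (L @ [v]). m w = m p @ [w])"
    have wV: "w \<in> verts G" using w by simp
    show "m w \<in> set PS''"
    proof (cases "w = root G \<or> (\<exists>p\<in>set L. m w = m p @ [w])")
      case True
      then have "m w \<in> set (\<pi> # PS')" using ps(3) PS w(1) by auto
      moreover have "m w \<noteq> \<pi>" using mvpi m_inj[OF wV vV] w(1) by auto
      ultimately show ?thesis by (simp add: PS''_def)
    next
      case False
      then have mw: "m w = m v @ [w]" using w(2) by auto
      have "w \<in> set (succs G v)"
        using is_path_snocD[of G "m v" w] m_props(1)[OF wV] mw m_ne[OF vV] m_props(3)[OF vV] by simp
      then have "w \<in> set F" using w(1) by (simp add: F_def)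
      then show ?thesis using mw by (simp add: PS''_def)
    qed
  qed
  have I2': "\<forall>x\<in>set (L @ [v]). \<forall>y\<in>verts G - set (L @ [v]). vlt x y"
    using I2 least by auto
  have I3': "sorted_wrt (\<lambda>x y. vlt x y) (L @ [v])"
    using I3 I2 vU by (simp add: sorted_wrt_append)
  have ex: "\<exists>PS. list_all2 (drel (L @ [v])) PS (F @ S') \<and> sorted_wrt (lex_less G) PS \<and>
        (\<forall>w\<in>verts G - set (L @ [v]). (w = root G \<or> (\<exists>p\<in>set (L @ [v]). m w = m p @ [w])) \<longrightarrow> m w \<in> set PS)"
    using rel sorted cover by blast
  have dL': "distinct (L @ [v])" using dL vL by simp
  have "dinv (L @ [v], F @ S')" unfolding dinv_def using dL' L'V I2' I3' ex by simp
  then show ?thesis by (simp add: F_def)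
qed

lemma dinv_step:
  assumes "dinv (L, S)" "S \<noteq> []"
  shows "dinv (dfs_step G (L, S))"
proof -
  obtain v S' where S: "S = v # S'" using assms(2) by (cases S) auto
  show ?thesis
  proof (cases "v \<in> set L")
    case True
    then show ?thesis using dinv_step_visited assms S by (simp add: dfs_step_def)
  next
    case False
    then show ?thesis using dinv_step_new assms S by (simp add: dfs_step_def)
  qed
qed

end

context fg begin

lemma dinv_hd_V: "dinv (L, v # S') \<Longrightarrow> v \<in> verts G"
  unfolding dinv_def using drel_V by (auto simp: list_all2_Cons2)

lemma dfs_terminates: "\<exists>t. while_option (\<lambda>(L, S). S \<noteq> []) (dfs_step G) ([], [root G]) = Some t"
proof (rule wf_rel_while_option_Some[where P = dinv and
      R = "measures [\<lambda>(L, S). card (verts G) - length L, \<lambda>(L, S). length S]"])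
  show "wf (measures [\<lambda>(L, S). card (verts G) - length L, \<lambda>(L, S). length S])" by simp
  show "dinv ([], [root G])" by (rule dinv_init)
  fix s assume a: "dinv s \<and> (case s of (L, S) \<Rightarrow> S \<noteq> [])"
  obtain L S where s: "s = (L, S)" by (cases s)
  then obtain v S' where S: "S = v # S'" using a by (cases S) auto
  show "dinv (dfs_step G s)" using dinv_step a s by auto
  show "(dfs_step G s, s) \<in> measures [\<lambda>(L, S). card (verts G) - length L, \<lambda>(L, S). length S]"
  proof (cases "v \<in> set L")
    case True
    then show ?thesis using s S by (simp add: dfs_step_def)
  next
    case False
    have inv: "dinv (L, v # S')" using a s S by simp
    have vV: "v \<in> verts G" using dinv_hd_V[OF inv] .
    have dL: "distinct L" and LV: "set L \<subseteq> verts G" using inv unfolding dinv_def by auto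
    have "set L \<subset> verts G" using LV vV False by blast
    then have "card (set L) < card (verts G)" using fin by (simp add: psubset_card_mono)
    then have "length L < card (verts G)" using distinct_card[OF dL] by simp
    then have "card (verts G) - Suc (length L) < card (verts G) - length L" by arith
    then show ?thesis using s S False by (simp add: dfs_step_def)
  qed
qed

lemma dfs_result:
  "distinct (dfs_traversal G) \<and> set (dfs_traversal G) = verts G \<and>
   sorted_wrt (\<lambda>x y. vlt x y) (dfs_traversal G)"
proof -
  obtain t where t: "while_option (\<lambda>(L, S). S \<noteq> []) (dfs_step G) ([], [root G]) = Some t"
    using dfs_terminates by blast
  have "dinv t"
  proof (rule while_option_rule[where P = dinv, OF _ t dinv_init])
    fix s assume "dinv s" "(\<lambda>(L, S). S \<noteq> []) s"
    then show "dinv (dfs_step G s)" using dinv_step by (cases s) auto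
  qed
  moreover have "snd t = []" using while_option_stop[OF t] by (cases t) auto
  ultimately have "dinv (fst t, [])" by (cases t) auto
  moreover have "dfs_traversal G = fst t" using t by (simp add: dfs_traversal_def)
  ultimately have d: "dinv (dfs_traversal G, [])" by simp
  have "set (dfs_traversal G) = verts G" by (rule dinv_final[OF d])
  moreover have "distinct (dfs_traversal G) \<and> sorted_wrt (\<lambda>x y. vlt x y) (dfs_traversal G)"
    using d unfolding dinv_def by simp
  ultimately show ?thesis by simp
qed

lemma dfs_order:
  assumes "x \<in> verts G" "y \<in> verts G"
  shows "trav_le (dfs_traversal G) x y \<longleftrightarrow> x = y \<or> vlt x y"
proof -
  define T where "T = dfs_traversal G"
  have T: "distinct T" "set T = verts G" "sorted_wrt (\<lambda>x y. vlt x y) T"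
    using dfs_result by (auto simp: T_def)
  obtain i where i: "i < length T" "T ! i = x" using assms(1) T(2) by (metis in_set_conv_nth)
  obtain j where j: "j < length T" "T ! j = y" using assms(2) T(2) by (metis in_set_conv_nth)
  have srt: "\<And>a b. a < b \<Longrightarrow> b < length T \<Longrightarrow> vlt (T ! a) (T ! b)"
    using T(3) unfolding sorted_wrt_iff_nth_less by blast
  show ?thesis unfolding T_def[symmetric]
  proof
    assume "trav_le T x y"
    then obtain a b where ab: "a \<le> b" "b < length T" "T ! a = x" "T ! b = y" unfolding trav_le_def by blast
    show "x = y \<or> vlt x y"
    proof (cases "a = b")
      case True then show ?thesis using ab by simp
    next
      case False then show ?thesis using ab srt[of a b] by simp
    qed
  next
    assume h: "x = y \<or> vlt x y"
    show "trav_le T x y"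
    proof (cases "i \<le> j")
      case True then show ?thesis unfolding trav_le_def using i j by blast
    next
      case False
      then have "vlt y x" using srt[of j i] i j by simp
      moreover have "x \<noteq> y" using False i j nth_eq_iff_index_eq[OF T(1) i(1) j(1)] by auto
      ultimately have False using h vlt_asym assms by blast
      then show ?thesis by simp
    qed
  qed
qed

end

definition mbfs :: "'v egraph \<Rightarrow> 'v \<Rightarrow> 'v list" where
  "mbfs G v = (SOME p. is_shortlex_min G (root G) v p)"

context fg begin

lemma sl_key:
  assumes "is_path G p" "is_path G q" "shortlex_less G p q"
  shows "length p < length q \<or> (length p = length q \<and> pcode G p < pcode G q)"
  using assms lex_less_pcode unfolding shortlex_less_def by blast

lemma sl_total:
  assumes "is_path G p" "is_path G q" "hd p = hd q" "p \<noteq> q"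
  shows "shortlex_less G p q \<or> shortlex_less G q p"
  using lex_total[OF assms] unfolding shortlex_less_def by auto

lemma sl_irrefl: "is_path G p \<Longrightarrow> \<not> shortlex_less G p p"
  using sl_key by blast

lemma sl_asym: "is_path G p \<Longrightarrow> is_path G q \<Longrightarrow> shortlex_less G p q \<Longrightarrow> shortlex_less G q p \<Longrightarrow> False"
proof -
  assume a: "is_path G p" "is_path G q" "shortlex_less G p q" "shortlex_less G q p"
  have "length p < length q \<or> (length p = length q \<and> pcode G p < pcode G q)" using sl_key a by blast
  moreover have "length q < length p \<or> (length q = length p \<and> pcode G q < pcode G p)" using sl_key a by blast
  ultimately show False by auto
qed

lemma sl_trans:
  assumes "is_path G p" "is_path G q" "is_path G s" "hd p = hd s"
    "shortlex_less G p q" "shortlex_less G q s"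
  shows "shortlex_less G p s"
  using assms(5,6) lex_trans[OF assms(1-4)] unfolding shortlex_less_def by auto

lemma slmin_exists_gen:
  assumes p0: "path_from_to G u v p0"
  shows "\<exists>p. is_shortlex_min G u v p"
proof -
  define n where "n = (LEAST n. \<exists>p. path_from_to G u v p \<and> length p = n)"
  have exn: "\<exists>p. path_from_to G u v p \<and> length p = n"
    unfolding n_def by (rule LeastI_ex) (use p0 in blast)
  have nmin: "n \<le> length q" if "path_from_to G u v q" for q
    unfolding n_def using that by (auto intro: Least_le)
  define P where "P = {p. path_from_to G u v p \<and> length p = n}"
  have "P \<subseteq> {xs. set xs \<subseteq> verts G \<and> length xs = n}"
    by (auto simp: P_def path_from_to_def is_path_def)
  then have finP: "finite P" using finite_lists_length_eq[OF fin] finite_subset by blast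
  have ne: "pcode G ` P \<noteq> {}" using exn by (auto simp: P_def)
  have "Min (pcode G ` P) \<in> pcode G ` P" using Min_in[OF _ ne] finP by blast
  then obtain p where pP: "p \<in> P" and pc: "pcode G p = Min (pcode G ` P)" by auto
  have "is_shortlex_min G u v p" unfolding is_shortlex_min_def
  proof (intro conjI allI impI)
    show pp: "path_from_to G u v p" using pP by (auto simp: P_def)
    fix q assume q: "path_from_to G u v q \<and> q \<noteq> p"
    have lp: "length p = n" using pP by (simp add: P_def)
    show "shortlex_less G p q"
    proof (cases "length q = n")
      case False
      then have "length p < length q" using nmin q lp by force
      then show ?thesis unfolding shortlex_less_def by simp
    next
      case True
      then have qP: "q \<in> P" using q by (simp add: P_def)
      have "pcode G p \<le> pcode G q" using pc qP finP by simp
      moreover have "is_path G p" "is_path G q" "hd p = hd q" using pp q by (auto simp: path_from_to_def)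
      moreover have "p \<noteq> q" using q by auto
      ultimately have "lex_less G p q \<or> lex_less G q p" using lex_total[of p q] by simp
      moreover have "\<not> lex_less G q p"
      proof
        assume "lex_less G q p"
        then have "pcode G q < pcode G p" using lex_less_pcode \<open>is_path G p\<close> \<open>is_path G q\<close> by blast
        then show False using \<open>pcode G p \<le> pcode G q\<close> by simp
      qed
      ultimately show ?thesis using True lp unfolding shortlex_less_def by simp
    qed
  qed
  then show ?thesis by blast
qed

lemma slmin_unique:
  assumes "is_shortlex_min G u v p" "is_shortlex_min G u v q"
  shows "p = q"
proof (rule ccontr)
  assume "p \<noteq> q"
  then have "shortlex_less G p q" "shortlex_less G q p" using assms unfolding is_shortlex_min_def by auto
  moreover have "is_path G p" "is_path G q" using assms unfolding is_shortlex_min_def path_from_to_def by auto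
  ultimately show False using sl_asym by blast
qed

lemma sl_snoc2:
  assumes "shortlex_less G p q"
  shows "shortlex_less G (p @ [s]) (q @ [c])"
proof (cases "length p < length q")
  case True then show ?thesis unfolding shortlex_less_def by simp
next
  case False
  then have len: "length p = length q" and l: "lex_less G p q" using assms unfolding shortlex_less_def by auto
  have "\<not> (\<exists>r. r \<noteq> [] \<and> q = p @ r)" using len by auto
  then obtain z x y r1 r2 where h: "z \<noteq> []" "p = z @ x # r1" "q = z @ y # r2" "edge_less G (last z) x y"
    using l unfolding lex_less_def by blast
  have "p @ [s] = z @ x # (r1 @ [s])" "q @ [c] = z @ y # (r2 @ [c])" using h by auto
  then have "lex_less G (p @ [s]) (q @ [c])" unfolding lex_less_def using h(1,4) by blast
  then show ?thesis using len unfolding shortlex_less_def by simp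
qed

lemma slmin_snoc:
  assumes pm: "is_shortlex_min G u w (a @ [w])" and ane: "a \<noteq> []"
  shows "is_shortlex_min G u (last a) a"
proof (rule ccontr)
  assume nm: "\<not> ?thesis"
  have pp: "is_path G (a @ [w])" "hd (a @ [w]) = u" using pm by (auto simp: is_shortlex_min_def path_from_to_def)
  have pa: "is_path G a" using is_path_take[OF pp(1), of "length a"] ane by simp
  have pfa: "path_from_to G u (last a) a" using pa pp(2) ane by (simp add: path_from_to_def)
  obtain q where qm: "is_shortlex_min G u (last a) q" using slmin_exists_gen[OF pfa] by blast
  have qq: "is_path G q" "hd q = u" "last q = last a"
    using qm by (auto simp: is_shortlex_min_def path_from_to_def)
  have "q \<noteq> a" using nm qm by auto
  then have sqa: "shortlex_less G q a" using qm pfa by (auto simp: is_shortlex_min_def)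
  have qne: "q \<noteq> []" using qq by auto
  have wS: "w \<in> set (succs G (last a))" using is_path_snocD[OF pp(1) ane] .
  have wV: "w \<in> verts G" using is_path_verts[OF pp(1), of w] by simp
  have pqw: "is_path G (q @ [w])" using is_path_snoc[OF qq(1)] qq(3) wS wV by simp
  have "path_from_to G u w (q @ [w])" using pqw qq qne by (simp add: path_from_to_def)
  moreover have "q @ [w] \<noteq> a @ [w]" using \<open>q \<noteq> a\<close> by simp
  ultimately have "shortlex_less G (a @ [w]) (q @ [w])" using pm unfolding is_shortlex_min_def by blast
  moreover have "shortlex_less G (q @ [w]) (a @ [w])" using sl_snoc2[OF sqa] .
  ultimately show False using sl_asym pp(1) pqw by blast
qed

lemma least_gen:
  assumes "finite U" "U \<noteq> {}" "U \<subseteq> verts G"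
    and irr: "\<And>x. x \<in> verts G \<Longrightarrow> \<not> lt x x"
    and tr: "\<And>x y z. x \<in> verts G \<Longrightarrow> y \<in> verts G \<Longrightarrow> z \<in> verts G \<Longrightarrow> lt x y \<Longrightarrow> lt y z \<Longrightarrow> lt x z"
    and tot: "\<And>x y. x \<in> verts G \<Longrightarrow> y \<in> verts G \<Longrightarrow> x \<noteq> y \<Longrightarrow> lt x y \<or> lt y x"
  shows "\<exists>u\<in>U. \<forall>y\<in>U. y \<noteq> u \<longrightarrow> lt u y"
  using assms(1-3)
proof (induction U rule: finite_ne_induct)
  case (singleton x) then show ?case by simp
next
  case (insert x F)
  then obtain u where u: "u \<in> F" "\<forall>y\<in>F. y \<noteq> u \<longrightarrow> lt u y" by auto
  have xV: "x \<in> verts G" and uV: "u \<in> verts G" and FV: "F \<subseteq> verts G" using insert u by auto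
  have xu: "x \<noteq> u" using insert u by auto
  show ?case
  proof (cases "lt x u")
    case True
    have "\<forall>y\<in>insert x F. y \<noteq> x \<longrightarrow> lt x y"
    proof (intro ballI impI)
      fix y assume y: "y \<in> insert x F" "y \<noteq> x"
      then have yF: "y \<in> F" by simp
      show "lt x y"
      proof (cases "y = u")
        case True then show ?thesis using \<open>lt x u\<close> by simp
      next
        case False
        then have "lt u y" using u yF by blast
        then show ?thesis using tr[OF xV uV] FV yF \<open>lt x u\<close> by blast
      qed
    qed
    then show ?thesis by blast
  next
    case False
    then have "lt u x" using tot[OF xV uV xu] by simp
    then have "\<forall>y\<in>insert x F. y \<noteq> u \<longrightarrow> lt u y" using u by auto
    then show ?thesis using u by blast
  qed
qed

end

context fg begin

abbreviation ms where "ms \<equiv> mbfs G"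
abbreviation svlt where "svlt x y \<equiv> shortlex_less G (ms x) (ms y)"

lemma ms_min: assumes "v \<in> verts G" shows "is_shortlex_min G (root G) v (ms v)"
proof -
  obtain p0 where "path_from_to G (root G) v p0" using reach_distinct conn[OF assms] by blast
  then have "\<exists>p. is_shortlex_min G (root G) v p" by (rule slmin_exists_gen)
  then show ?thesis unfolding mbfs_def by (rule someI_ex)
qed

lemma ms_props: assumes "v \<in> verts G"
  shows "is_path G (ms v)" "hd (ms v) = root G" "last (ms v) = v"
  using ms_min[OF assms] by (auto simp: is_shortlex_min_def path_from_to_def)

lemma ms_ne: "v \<in> verts G \<Longrightarrow> ms v \<noteq> []" using ms_props(1) by force

lemma ms_eq: assumes "is_shortlex_min G (root G) v p" shows "ms v = p"
proof -
  have pp: "is_path G p" "last p = v" using assms by (auto simp: is_shortlex_min_def path_from_to_def)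
  then have "p \<noteq> []" by auto
  then have "last p \<in> set p" by simp
  then have "v \<in> verts G" using is_path_verts[OF pp(1), of "last p"] pp(2) by simp
  then show ?thesis using slmin_unique ms_min assms by blast
qed

lemma ms_root: "ms (root G) = [root G]"
proof (rule ms_eq)
  show "is_shortlex_min G (root G) (root G) [root G]" unfolding is_shortlex_min_def
  proof (intro conjI allI impI)
    fix q assume q: "path_from_to G (root G) (root G) q \<and> q \<noteq> [root G]"
    then have "q \<noteq> []" "hd q = root G" by (auto simp: path_from_to_def)
    then obtain q' where qa: "q = root G # q'" by (cases q) auto
    then have "q' \<noteq> []" using q by auto
    then show "shortlex_less G [root G] q" using qa unfolding shortlex_less_def by simp
  qed (use root_in in \<open>auto simp: path_from_to_def\<close>)
qed

lemma ms_inj: "v \<in> verts G \<Longrightarrow> w \<in> verts G \<Longrightarrow> ms v = ms w \<Longrightarrow> v = w"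
  using ms_props(3) by metis

lemma ms_parent:
  assumes "w \<in> verts G" "w \<noteq> root G"
  shows "\<exists>p\<in>verts G. ms w = ms p @ [w] \<and> w \<in> set (succs G p)"
proof -
  have ne: "ms w \<noteq> []" using ms_ne assms by simp
  have mw: "ms w = butlast (ms w) @ [w]" using ne ms_props(3)[OF assms(1)]
    by (metis append_butlast_last_id)
  have bne: "butlast (ms w) \<noteq> []"
  proof
    assume "butlast (ms w) = []"
    then have "ms w = [w]" using mw by simp
    then show False using ms_props(2)[OF assms(1)] assms(2) by simp
  qed
  have lm: "is_shortlex_min G (root G) (last (butlast (ms w))) (butlast (ms w))"
    using slmin_snoc[of "root G" w "butlast (ms w)"] ms_min[OF assms(1)] mw bne by simp
  define p where "p = last (butlast (ms w))"
  have "ms p = butlast (ms w)" using ms_eq lm p_def by simp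
  moreover have "p \<in> verts G"
  proof -
    have "is_path G (butlast (ms w))" using lm by (simp add: is_shortlex_min_def path_from_to_def)
    moreover have "p \<in> set (butlast (ms w))" using bne by (simp add: p_def)
    ultimately show ?thesis using is_path_verts by metis
  qed
  moreover have "w \<in> set (succs G p)"
    using is_path_snocD[of G "butlast (ms w)" w] mw ms_props(1)[OF assms(1)] bne
    unfolding p_def by simp
  ultimately show ?thesis using mw by metis
qed

lemma svlt_irrefl: "v \<in> verts G \<Longrightarrow> \<not> svlt v v"
  using sl_irrefl ms_props(1) by blast

lemma svlt_asym: "v \<in> verts G \<Longrightarrow> w \<in> verts G \<Longrightarrow> svlt v w \<Longrightarrow> svlt w v \<Longrightarrow> False"
  using sl_asym ms_props(1) by blast

lemma svlt_trans: "u \<in> verts G \<Longrightarrow> v \<in> verts G \<Longrightarrow> w \<in> verts G \<Longrightarrow> svlt u v \<Longrightarrow> svlt v w \<Longrightarrow> svlt u w"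
  using sl_trans[of "ms u" "ms v" "ms w"] ms_props(1,2) by simp

lemma svlt_total: "v \<in> verts G \<Longrightarrow> w \<in> verts G \<Longrightarrow> v \<noteq> w \<Longrightarrow> svlt v w \<or> svlt w v"
  using sl_total[of "ms v" "ms w"] ms_props(1,2) ms_inj by metis

lemma sleast_exists:
  assumes "U \<subseteq> verts G" "U \<noteq> {}"
  shows "\<exists>u\<in>U. \<forall>y\<in>U. y \<noteq> u \<longrightarrow> svlt u y"
  using least_gen[of U "\<lambda>x y. svlt x y"] assms fin finite_subset svlt_irrefl svlt_trans svlt_total
  by blast

end

context fg begin

definition brel :: "'v list \<Rightarrow> 'v list \<Rightarrow> 'v \<Rightarrow> bool" where
  "brel L \<pi> s \<longleftrightarrow> (\<pi> = [root G] \<and> s = root G) \<or> (\<exists>p\<in>set L. \<pi> = ms p @ [s] \<and> s \<in> set (succs G p))"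

definition binv :: "'v list \<times> 'v list \<Rightarrow> bool" where
  "binv st \<longleftrightarrow> (case st of (L, Q) \<Rightarrow>
     distinct L \<and> set L \<subseteq> verts G \<and>
     (\<forall>x\<in>set L. \<forall>y\<in>verts G - set L. svlt x y) \<and>
     sorted_wrt (\<lambda>x y. svlt x y) L \<and>
     (\<exists>PS. list_all2 (brel L) PS Q \<and> sorted_wrt (shortlex_less G) PS \<and>
        (\<forall>w\<in>verts G - set L. (w = root G \<or> (\<exists>p\<in>set L. ms w = ms p @ [w])) \<longrightarrow> ms w \<in> set PS)))"

lemma brel_last: "brel L \<pi> s \<Longrightarrow> last \<pi> = s"
  unfolding brel_def by auto

lemma brel_V: "set L \<subseteq> verts G \<Longrightarrow> brel L \<pi> s \<Longrightarrow> s \<in> verts G"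
  unfolding brel_def using root_in succ_in by blast

lemma brel_mono: "set L \<subseteq> set L' \<Longrightarrow> brel L \<pi> s \<Longrightarrow> brel L' \<pi> s"
  unfolding brel_def by blast

lemma binv_init: "binv ([], [root G])"
  unfolding binv_def
  by (auto simp: brel_def ms_root intro!: exI[of _ "[[root G]]"])

lemma sleast_parent:
  assumes I2: "\<forall>x\<in>set L. \<forall>y\<in>verts G - set L. svlt x y" and LV: "set L \<subseteq> verts G"
    and u: "u \<in> verts G - set L" and least: "\<forall>y\<in>verts G - set L. y \<noteq> u \<longrightarrow> svlt u y"
  shows "u = root G \<or> (\<exists>p\<in>set L. ms u = ms p @ [u])"
proof (cases "u = root G")
  case False
  then obtain p where p: "p \<in> verts G" "ms u = ms p @ [u]" using ms_parent u by blast
  have uV: "u \<in> verts G" using u by blast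
  have "svlt p u" using p(2) unfolding shortlex_less_def by simp
  have "p \<in> set L"
  proof (rule ccontr)
    assume "p \<notin> set L"
    then have pU: "p \<in> verts G - set L" using p(1) by blast
    show False
    proof (cases "p = u")
      case True then show False using \<open>svlt p u\<close> svlt_irrefl[OF uV] by simp
    next
      case False
      then have "svlt u p" using least pU by blast
      then show False using \<open>svlt p u\<close> svlt_asym[OF p(1) uV] by simp
    qed
  qed
  then show ?thesis using p by blast
qed simp

lemma binv_final:
  assumes "binv (L, [])"
  shows "set L = verts G"
proof (rule ccontr)
  assume ne: "set L \<noteq> verts G"
  have LV: "set L \<subseteq> verts G" and I2: "\<forall>x\<in>set L. \<forall>y\<in>verts G - set L. svlt x y"
    and I5: "\<forall>w\<in>verts G - set L. (w = root G \<or> (\<exists>p\<in>set L. ms w = ms p @ [w])) \<longrightarrow> ms w \<in> set []"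
    using assms unfolding binv_def by auto
  have "verts G - set L \<noteq> {}" using ne LV by blast
  then obtain u where u: "u \<in> verts G - set L" "\<forall>y\<in>verts G - set L. y \<noteq> u \<longrightarrow> svlt u y"
    using sleast_exists[of "verts G - set L"] by blast
  then show False using sleast_parent[OF I2 LV u] I5 by simp
qed

lemma binv_step_visited:
  assumes inv: "binv (L, v # S')" and vL: "v \<in> set L"
  shows "binv (L, S')"
proof -
  obtain PS where ps: "list_all2 (brel L) PS (v # S')" "sorted_wrt (shortlex_less G) PS"
    "\<forall>w\<in>verts G - set L. (w = root G \<or> (\<exists>p\<in>set L. ms w = ms p @ [w])) \<longrightarrow> ms w \<in> set PS"
    using inv unfolding binv_def by auto
  obtain \<pi> PS' where PS: "PS = \<pi> # PS'" using ps(1) by (cases PS) auto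
  have rv: "brel L \<pi> v" "list_all2 (brel L) PS' S'" using ps(1) PS by auto
  have "\<forall>w\<in>verts G - set L. (w = root G \<or> (\<exists>p\<in>set L. ms w = ms p @ [w])) \<longrightarrow> ms w \<in> set PS'"
  proof (intro ballI impI)
    fix w assume w: "w \<in> verts G - set L" "w = root G \<or> (\<exists>p\<in>set L. ms w = ms p @ [w])"
    then have "ms w \<in> set (\<pi> # PS')" using ps(3) PS by blast
    moreover have "ms w \<noteq> \<pi>" using brel_last[OF rv(1)] ms_props(3)[of w] w vL by auto
    ultimately show "ms w \<in> set PS'" by simp
  qed
  moreover have "sorted_wrt (shortlex_less G) PS'" using ps(2) PS by simp
  ultimately have ex: "\<exists>PS. list_all2 (brel L) PS S' \<and> sorted_wrt (shortlex_less G) PS \<and>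
        (\<forall>w\<in>verts G - set L. (w = root G \<or> (\<exists>p\<in>set L. ms w = ms p @ [w])) \<longrightarrow> ms w \<in> set PS)"
    using rv(2) by blast
  have "distinct L \<and> set L \<subseteq> verts G \<and>
     (\<forall>x\<in>set L. \<forall>y\<in>verts G - set L. svlt x y) \<and>
     sorted_wrt (\<lambda>x y. svlt x y) L" using inv unfolding binv_def by simp
  then show ?thesis using ex unfolding binv_def by simp
qed

lemma binv_step_new:
  assumes inv: "binv (L, v # S')" and vL: "v \<notin> set L"
  shows "binv (L @ [v], S' @ filter (\<lambda>w. w \<notin> set (L @ [v])) (succs G v))"
proof -
  have dL: "distinct L" and LV: "set L \<subseteq> verts G"
    and I2: "\<forall>x\<in>set L. \<forall>y\<in>verts G - set L. svlt x y"
    and I3: "sorted_wrt (\<lambda>x y. svlt x y) L"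
    using inv unfolding binv_def by auto
  obtain PS where ps: "list_all2 (brel L) PS (v # S')" "sorted_wrt (shortlex_less G) PS"
    "\<forall>w\<in>verts G - set L. (w = root G \<or> (\<exists>p\<in>set L. ms w = ms p @ [w])) \<longrightarrow> ms w \<in> set PS"
    using inv unfolding binv_def by auto
  obtain \<pi> PS' where PS: "PS = \<pi> # PS'" using ps(1) by (cases PS) auto
  have rv: "brel L \<pi> v" and rS: "list_all2 (brel L) PS' S'" using ps(1) PS by auto
  have sPS: "\<forall>b\<in>set PS'. shortlex_less G \<pi> b" "sorted_wrt (shortlex_less G) PS'" using ps(2) PS by auto
  have vV: "v \<in> verts G" using brel_V[OF LV rv] .
  have vU: "v \<in> verts G - set L" using vV vL by blast
  obtain u where u: "u \<in> verts G - set L" "\<forall>y\<in>verts G - set L. y \<noteq> u \<longrightarrow> svlt u y"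
    using sleast_exists[of "verts G - set L"] vU by blast
  have uV: "u \<in> verts G" using u by blast
  have "ms u \<in> set (\<pi> # PS')" using ps(3) PS sleast_parent[OF I2 LV u] u(1) by blast
  then have pi_mu: "\<pi> = ms u \<or> shortlex_less G \<pi> (ms u)" using sPS by auto
  have pipath: "is_path G \<pi> \<and> hd \<pi> = root G \<and> last \<pi> = v"
    using rv unfolding brel_def
  proof (elim disjE bexE conjE)
    assume "\<pi> = [root G]" "v = root G"
    then show ?thesis using root_in by simp
  next
    fix p assume p: "p \<in> set L" "\<pi> = ms p @ [v]" "v \<in> set (succs G p)"
    have pV: "p \<in> verts G" using p LV by blast
    have "is_path G (ms p @ [v])"
      using is_path_snoc[OF ms_props(1)[OF pV]] ms_props(3)[OF pV] p(3) vV by simp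
    then show ?thesis using p ms_props[OF pV] ms_ne[OF pV] by simp
  qed
  have pip: "is_path G \<pi>" "hd \<pi> = root G" using pipath by auto
  have mv_pi: "ms v = \<pi> \<or> shortlex_less G (ms v) \<pi>"
  proof (cases "ms v = \<pi>")
    case False
    have "\<forall>q. path_from_to G (root G) v q \<and> q \<noteq> ms v \<longrightarrow> shortlex_less G (ms v) q"
      using ms_min[OF vV] by (simp add: is_shortlex_min_def)
    moreover have "path_from_to G (root G) v \<pi>" using pipath by (simp add: path_from_to_def)
    ultimately show ?thesis using False by auto
  qed simp
  have u_v: "u = v \<or> svlt u v"
  proof (cases "u = v")
    case False
    then show ?thesis using u(2) vU by simp
  qed simp
  have pmu: "is_path G (ms u)" "hd (ms u) = root G" using ms_props[OF uV] by auto
  have pmv: "is_path G (ms v)" "hd (ms v) = root G" using ms_props[OF vV] by auto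
  have uv: "u = v"
  proof (rule ccontr)
    assume "u \<noteq> v"
    then have l1: "shortlex_less G (ms u) (ms v)" using u_v by simp
    have l2: "shortlex_less G (ms u) \<pi>"
    proof (cases "ms v = \<pi>")
      case True then show ?thesis using l1 by simp
    next
      case False
      then have "shortlex_less G (ms v) \<pi>" using mv_pi by simp
      then show ?thesis using sl_trans[OF pmu(1) pmv(1) pip(1)] l1 pmu(2) pip(2) by simp
    qed
    show False
    proof (cases "\<pi> = ms u")
      case True then show False using l2 sl_irrefl[OF pmu(1)] by simp
    next
      case False
      then have "shortlex_less G \<pi> (ms u)" using pi_mu by simp
      then show False using l2 sl_asym[OF pmu(1) pip(1)] by simp
    qed
  qed
  have mvpi: "ms v = \<pi>"
  proof (rule ccontr)
    assume ne: "ms v \<noteq> \<pi>"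
    then have "shortlex_less G (ms v) \<pi>" using mv_pi by simp
    moreover have "shortlex_less G \<pi> (ms v)" using pi_mu uv ne by auto
    ultimately show False using sl_asym[OF pmv(1) pip(1)] by simp
  qed
  have least: "\<forall>y\<in>verts G - set L. y \<noteq> v \<longrightarrow> svlt v y" using u(2) uv by simp
  define F where "F = filter (\<lambda>w. w \<notin> set (L @ [v])) (succs G v)"
  define PS'' where "PS'' = PS' @ map (\<lambda>c. ms v @ [c]) F"
  have FS: "set F \<subseteq> set (succs G v)" "\<forall>c\<in>set F. c \<notin> set (L @ [v])" by (auto simp: F_def)
  have L'V: "set (L @ [v]) \<subseteq> verts G" using LV vV by simp
  have r1: "list_all2 (brel (L @ [v])) (map (\<lambda>c. ms v @ [c]) F) F"
    unfolding list_all2_conv_all_nth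
  proof (intro conjI allI impI)
    fix i assume "i < length (map (\<lambda>c. ms v @ [c]) F)"
    then have "i < length F" by simp
    then have "F ! i \<in> set (succs G v)" using FS(1) nth_mem by blast
    then show "brel (L @ [v]) (map (\<lambda>c. ms v @ [c]) F ! i) (F ! i)"
      unfolding brel_def using \<open>i < length F\<close> by auto
  qed simp
  have r2: "list_all2 (brel (L @ [v])) PS' S'"
    using rS by (rule list_all2_mono) (auto intro: brel_mono)
  have rel: "list_all2 (brel (L @ [v])) PS'' (S' @ F)"
    unfolding PS''_def by (rule list_all2_appendI[OF r2 r1])
  have se: "sorted_wrt (edge_less G v) (succs G v)"
    unfolding sorted_wrt_iff_nth_less edge_less_def by blast
  then have "sorted_wrt (edge_less G v) F" unfolding F_def by (rule sorted_wrt_filter)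
  moreover have "shortlex_less G (ms v @ [x]) (ms v @ [y])" if exy: "edge_less G v x y" for x y
  proof -
    have "ms v \<noteq> [] \<and> ms v @ [x] = ms v @ x # [] \<and> ms v @ [y] = ms v @ y # [] \<and> edge_less G (last (ms v)) x y"
      using ms_ne[OF vV] ms_props(3)[OF vV] exy by simp
    then have "lex_less G (ms v @ [x]) (ms v @ [y])" unfolding lex_less_def by blast
    then show ?thesis unfolding shortlex_less_def by simp
  qed
  ultimately have s1: "sorted_wrt (shortlex_less G) (map (\<lambda>c. ms v @ [c]) F)"
    unfolding sorted_wrt_map by (rule sorted_wrt_mono_rel[rotated]) blast
  have s3: "shortlex_less G b (ms v @ [c])" if b: "b \<in> set PS'" for b c
  proof -
    obtain i where i: "i < length PS'" "PS' ! i = b" using b by (auto simp: in_set_conv_nth)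
    have rb: "brel L b (S' ! i)" using list_all2_nthD[OF rS i(1)] i(2) by simp
    show ?thesis using rb unfolding brel_def
    proof (elim disjE bexE conjE)
      assume "b = [root G]"
      then show ?thesis using ms_ne[OF vV] unfolding shortlex_less_def by (cases "ms v") auto
    next
      fix p assume p: "p \<in> set L" "b = ms p @ [S' ! i]"
      have "svlt p v" using I2 p(1) vU by blast
      then show ?thesis using sl_snoc2 p(2) by simp
    qed
  qed
  have sorted: "sorted_wrt (shortlex_less G) PS''"
    unfolding PS''_def sorted_wrt_append using s1 sPS(2) s3 by auto
  have cover: "\<forall>w\<in>verts G - set (L @ [v]). (w = root G \<or> (\<exists>p\<in>set (L @ [v]). ms w = ms p @ [w])) \<longrightarrow> ms w \<in> set PS''"
  proof (intro ballI impI)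
    fix w assume w: "w \<in> verts G - set (L @ [v])" "w = root G \<or> (\<exists>p\<in>set (L @ [v]). ms w = ms p @ [w])"
    have wV: "w \<in> verts G" using w by simp
    show "ms w \<in> set PS''"
    proof (cases "w = root G \<or> (\<exists>p\<in>set L. ms w = ms p @ [w])")
      case True
      then have "ms w \<in> set (\<pi> # PS')" using ps(3) PS w(1) by auto
      moreover have "ms w \<noteq> \<pi>" using mvpi ms_inj[OF wV vV] w(1) by auto
      ultimately show ?thesis by (simp add: PS''_def)
    next
      case False
      then have mw: "ms w = ms v @ [w]" using w(2) by auto
      have "w \<in> set (succs G v)"
        using is_path_snocD[of G "ms v" w] ms_props(1)[OF wV] mw ms_ne[OF vV] ms_props(3)[OF vV] by simp
      then have "w \<in> set F" using w(1) by (simp add: F_def)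
      then show ?thesis using mw by (simp add: PS''_def)
    qed
  qed
  have I2': "\<forall>x\<in>set (L @ [v]). \<forall>y\<in>verts G - set (L @ [v]). svlt x y"
    using I2 least by auto
  have I3': "sorted_wrt (\<lambda>x y. svlt x y) (L @ [v])"
    using I3 I2 vU by (simp add: sorted_wrt_append)
  have ex: "\<exists>PS. list_all2 (brel (L @ [v])) PS (S' @ F) \<and> sorted_wrt (shortlex_less G) PS \<and>
        (\<forall>w\<in>verts G - set (L @ [v]). (w = root G \<or> (\<exists>p\<in>set (L @ [v]). ms w = ms p @ [w])) \<longrightarrow> ms w \<in> set PS)"
    using rel sorted cover by blast
  have dL': "distinct (L @ [v])" using dL vL by simp
  have "binv (L @ [v], S' @ F)" unfolding binv_def using dL' L'V I2' I3' ex by simp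
  then show ?thesis by (simp add: F_def)
qed

lemma binv_step:
  assumes "binv (L, S)" "S \<noteq> []"
  shows "binv (bfs_step G (L, S))"
proof -
  obtain v S' where S: "S = v # S'" using assms(2) by (cases S) auto
  show ?thesis
  proof (cases "v \<in> set L")
    case True
    then show ?thesis using binv_step_visited assms S by (simp add: bfs_step_def)
  next
    case False
    then show ?thesis using binv_step_new assms S by (simp add: bfs_step_def)
  qed
qed

lemma binv_hd_V: "binv (L, v # S') \<Longrightarrow> v \<in> verts G"
  unfolding binv_def using brel_V by (auto simp: list_all2_Cons2)

lemma bfs_terminates: "\<exists>t. while_option (\<lambda>(L, S). S \<noteq> []) (bfs_step G) ([], [root G]) = Some t"
proof (rule wf_rel_while_option_Some[where P = binv and
      R = "measures [\<lambda>(L, S). card (verts G) - length L, \<lambda>(L, S). length S]"])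
  show "wf (measures [\<lambda>(L, S). card (verts G) - length L, \<lambda>(L, S). length S])" by simp
  show "binv ([], [root G])" by (rule binv_init)
  fix s assume a: "binv s \<and> (case s of (L, S) \<Rightarrow> S \<noteq> [])"
  obtain L S where s: "s = (L, S)" by (cases s)
  then obtain v S' where S: "S = v # S'" using a by (cases S) auto
  show "binv (bfs_step G s)" using binv_step a s by auto
  show "(bfs_step G s, s) \<in> measures [\<lambda>(L, S). card (verts G) - length L, \<lambda>(L, S). length S]"
  proof (cases "v \<in> set L")
    case True
    then show ?thesis using s S by (simp add: bfs_step_def)
  next
    case False
    have inv: "binv (L, v # S')" using a s S by simp
    have vV: "v \<in> verts G" using binv_hd_V[OF inv] .
    have dL: "distinct L" and LV: "set L \<subseteq> verts G" using inv unfolding binv_def by auto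
    have "set L \<subset> verts G" using LV vV False by blast
    then have "card (set L) < card (verts G)" using fin by (simp add: psubset_card_mono)
    then have "length L < card (verts G)" using distinct_card[OF dL] by simp
    then have "card (verts G) - Suc (length L) < card (verts G) - length L" by arith
    then show ?thesis using s S False by (simp add: bfs_step_def)
  qed
qed

lemma bfs_result:
  "distinct (bfs_traversal G) \<and> set (bfs_traversal G) = verts G \<and>
   sorted_wrt (\<lambda>x y. svlt x y) (bfs_traversal G)"
proof -
  obtain t where t: "while_option (\<lambda>(L, S). S \<noteq> []) (bfs_step G) ([], [root G]) = Some t"
    using bfs_terminates by blast
  have "binv t"
  proof (rule while_option_rule[where P = binv, OF _ t binv_init])
    fix s assume "binv s" "(\<lambda>(L, S). S \<noteq> []) s"
    then show "binv (bfs_step G s)" using binv_step by (cases s) auto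
  qed
  moreover have "snd t = []" using while_option_stop[OF t] by (cases t) auto
  ultimately have "binv (fst t, [])" by (cases t) auto
  moreover have "bfs_traversal G = fst t" using t by (simp add: bfs_traversal_def)
  ultimately have d: "binv (bfs_traversal G, [])" by simp
  have "set (bfs_traversal G) = verts G" by (rule binv_final[OF d])
  moreover have "distinct (bfs_traversal G) \<and> sorted_wrt (\<lambda>x y. svlt x y) (bfs_traversal G)"
    using d unfolding binv_def by simp
  ultimately show ?thesis by simp
qed

lemma bfs_order:
  assumes "x \<in> verts G" "y \<in> verts G"
  shows "trav_le (bfs_traversal G) x y \<longleftrightarrow> x = y \<or> svlt x y"
proof -
  define T where "T = bfs_traversal G"
  have T: "distinct T" "set T = verts G" "sorted_wrt (\<lambda>x y. svlt x y) T"
    using bfs_result by (auto simp: T_def)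
  obtain i where i: "i < length T" "T ! i = x" using assms(1) T(2) by (metis in_set_conv_nth)
  obtain j where j: "j < length T" "T ! j = y" using assms(2) T(2) by (metis in_set_conv_nth)
  have srt: "\<And>a b. a < b \<Longrightarrow> b < length T \<Longrightarrow> svlt (T ! a) (T ! b)"
    using T(3) unfolding sorted_wrt_iff_nth_less by blast
  show ?thesis unfolding T_def[symmetric]
  proof
    assume "trav_le T x y"
    then obtain a b where ab: "a \<le> b" "b < length T" "T ! a = x" "T ! b = y" unfolding trav_le_def by blast
    show "x = y \<or> svlt x y"
    proof (cases "a = b")
      case True then show ?thesis using ab by simp
    next
      case False then show ?thesis using ab srt[of a b] by simp
    qed
  next
    assume h: "x = y \<or> svlt x y"
    show "trav_le T x y"
    proof (cases "i \<le> j")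
      case True then show ?thesis unfolding trav_le_def using i j by blast
    next
      case False
      then have "svlt y x" using srt[of j i] i j by simp
      moreover have "x \<noteq> y" using False i j nth_eq_iff_index_eq[OF T(1) i(1) j(1)] by auto
      ultimately have False using h svlt_asym assms by blast
      then show ?thesis by simp
    qed
  qed
qed

end

lemma lex_map:
  assumes hom: "graph_hom G H h" and p: "is_path G p" and l: "lex_less G p q"
  shows "lex_less H (map h p) (map h q)"
  using l unfolding lex_less_def
proof (elim disjE exE conjE)
  fix r assume "r \<noteq> []" "q = p @ r"
  then show "(\<exists>r. r \<noteq> [] \<and> map h q = map h p @ r) \<or>
    (\<exists>z x y r1 r2. z \<noteq> [] \<and> map h p = z @ x # r1 \<and> map h q = z @ y # r2 \<and> edge_less H (last z) x y)"
    by auto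
next
  fix z x y r1 r2 assume h: "z \<noteq> []" "p = z @ x # r1" "q = z @ y # r2" "edge_less G (last z) x y"
  have "last z \<in> set p" using h by simp
  then have "last z \<in> verts G" using is_path_verts[OF p] by blast
  then have e: "edge_less H (h (last z)) (h x) (h y)" using hom h(4) unfolding graph_hom_def by blast
  have "map h z \<noteq> []" "map h p = map h z @ h x # map h r1" "map h q = map h z @ h y # map h r2"
    "last (map h z) = h (last z)" using h by (auto simp: last_map)
  then show "(\<exists>r. r \<noteq> [] \<and> map h q = map h p @ r) \<or>
    (\<exists>z x y r1 r2. z \<noteq> [] \<and> map h p = z @ x # r1 \<and> map h q = z @ y # r2 \<and> edge_less H (last z) x y)"
    using e by metis
qed

lemma sl_map:
  assumes hom: "graph_hom G H h" and p: "is_path G p" and l: "shortlex_less G p q"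
  shows "shortlex_less H (map h p) (map h q)"
  using l lex_map[OF hom p] unfolding shortlex_less_def by auto

lemma hom_root:
  assumes "fin_graph G" "graph_hom G H h"
  shows "h (root G) = root H"
  using assms unfolding fin_graph_def graph_hom_def by blast

lemma hom_verts:
  assumes "graph_hom G H h" "v \<in> verts G"
  shows "h v \<in> verts H"
  using assms unfolding graph_hom_def by blast

theorem corollary9p4:
  shows
   "(\<forall>G :: 'a egraph. fin_graph G \<longrightarrow>
        distinct (dfs_traversal G) \<and> set (dfs_traversal G) = verts G) \<and>
    (\<forall>(G :: 'a egraph) (H :: 'b egraph) h. fin_graph G \<and> fin_graph H \<and> lex_hom G H h \<longrightarrow>
        (\<forall>v \<in> verts G. \<forall>w \<in> verts G. trav_le (dfs_traversal G) v w \<longrightarrow>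
            trav_le (dfs_traversal H) (h v) (h w))) \<and>
    (\<forall>G :: 'a egraph. fin_graph G \<longrightarrow>
        distinct (bfs_traversal G) \<and> set (bfs_traversal G) = verts G) \<and>
    (\<forall>(G :: 'a egraph) (H :: 'b egraph) h. fin_graph G \<and> fin_graph H \<and> shortlex_hom G H h \<longrightarrow>
        (\<forall>v \<in> verts G. \<forall>w \<in> verts G. trav_le (bfs_traversal G) v w \<longrightarrow>
            trav_le (bfs_traversal H) (h v) (h w)))"
proof -
  have A: "\<forall>G :: 'a egraph. fin_graph G \<longrightarrow>
        distinct (dfs_traversal G) \<and> set (dfs_traversal G) = verts G"
  proof (intro allI impI)
    fix G :: "'a egraph" assume "fin_graph G"
    then interpret fg G by unfold_locales
    show "distinct (dfs_traversal G) \<and> set (dfs_traversal G) = verts G" using dfs_result by simp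
  qed
  have C: "\<forall>G :: 'a egraph. fin_graph G \<longrightarrow>
        distinct (bfs_traversal G) \<and> set (bfs_traversal G) = verts G"
  proof (intro allI impI)
    fix G :: "'a egraph" assume "fin_graph G"
    then interpret fg G by unfold_locales
    show "distinct (bfs_traversal G) \<and> set (bfs_traversal G) = verts G" using bfs_result by simp
  qed
  have B: "\<forall>(G :: 'a egraph) (H :: 'b egraph) h. fin_graph G \<and> fin_graph H \<and> lex_hom G H h \<longrightarrow>
        (\<forall>v \<in> verts G. \<forall>w \<in> verts G. trav_le (dfs_traversal G) v w \<longrightarrow>
            trav_le (dfs_traversal H) (h v) (h w))"
  proof (intro allI impI ballI)
  fix G :: "'a egraph" and H :: "'b egraph" and h v w
  assume a: "fin_graph G \<and> fin_graph H \<and> lex_hom G H h" and v: "v \<in> verts G" and w: "w \<in> verts G"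
    and t: "trav_le (dfs_traversal G) v w"
  have fG: "fg G" and fH: "fg H" using a by (auto intro: fg.intro)
  have hom: "graph_hom G H h" and lh: "\<forall>u \<in> verts G. \<forall>v \<in> verts G. \<forall>p.
        is_lex_min G u v p \<longrightarrow> is_lex_min H (h u) (h v) (map h p)" using a by (auto simp: lex_hom_def)
  have hr: "h (root G) = root H" using hom_root a hom by blast
  have rG: "root G \<in> verts G" using fg.root_in[OF fG] .
  have hv: "h v \<in> verts H" and hw: "h w \<in> verts H" using hom_verts[OF hom] v w by auto
  have mm: "mdfs H (h x) = map h (mdfs G x)" if x: "x \<in> verts G" for x
  proof -
    have "is_lex_min H (h (root G)) (h x) (map h (mdfs G x))"
      using lh rG x fg.m_min[OF fG x] by blast
    then show ?thesis using fg.m_eq[OF fH] hr by simp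
  qed
  have "v = w \<or> lex_less G (mdfs G v) (mdfs G w)" using fg.dfs_order[OF fG v w] t by simp
  then have "h v = h w \<or> lex_less H (mdfs H (h v)) (mdfs H (h w))"
    using lex_map[OF hom fg.m_props(1)[OF fG v]] mm v w by auto
  then show "trav_le (dfs_traversal H) (h v) (h w)" using fg.dfs_order[OF fH hv hw] by simp
  qed
  have D: "\<forall>(G :: 'a egraph) (H :: 'b egraph) h. fin_graph G \<and> fin_graph H \<and> shortlex_hom G H h \<longrightarrow>
        (\<forall>v \<in> verts G. \<forall>w \<in> verts G. trav_le (bfs_traversal G) v w \<longrightarrow>
            trav_le (bfs_traversal H) (h v) (h w))"
  proof (intro allI impI ballI)
  fix G :: "'a egraph" and H :: "'b egraph" and h v w
  assume a: "fin_graph G \<and> fin_graph H \<and> shortlex_hom G H h" and v: "v \<in> verts G" and w: "w \<in> verts G"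
    and t: "trav_le (bfs_traversal G) v w"
  have fG: "fg G" and fH: "fg H" using a by (auto intro: fg.intro)
  have hom: "graph_hom G H h" and lh: "\<forall>u \<in> verts G. \<forall>v \<in> verts G. \<forall>p.
        is_shortlex_min G u v p \<longrightarrow> is_shortlex_min H (h u) (h v) (map h p)" using a by (auto simp: shortlex_hom_def)
  have hr: "h (root G) = root H" using hom_root a hom by blast
  have rG: "root G \<in> verts G" using fg.root_in[OF fG] .
  have hv: "h v \<in> verts H" and hw: "h w \<in> verts H" using hom_verts[OF hom] v w by auto
  have mm: "mbfs H (h x) = map h (mbfs G x)" if x: "x \<in> verts G" for x
  proof -
    have "is_shortlex_min H (h (root G)) (h x) (map h (mbfs G x))"
      using lh rG x fg.ms_min[OF fG x] by blast
    then show ?thesis using fg.ms_eq[OF fH] hr by simp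
  qed
  have "v = w \<or> shortlex_less G (mbfs G v) (mbfs G w)" using fg.bfs_order[OF fG v w] t by simp
  then have "h v = h w \<or> shortlex_less H (mbfs H (h v)) (mbfs H (h w))"
    using sl_map[OF hom fg.ms_props(1)[OF fG v]] mm v w by auto
  then show "trav_le (bfs_traversal H) (h v) (h w)" using fg.bfs_order[OF fH hv hw] by simp
  qed
  show ?thesis using A B C D by blast
qed

end
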